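(* Let $\mathbb Z\langle X\rangle$ be the free unital associative ring on $X=\{x_1,x_2,\dots\}$ and let $I$ be the left ideal of $\mathbb Z\langle X\rangle$ generated by a set $S\subset\Gamma$; let $\Gamma\cdot S$ be the left ideal of $\Gamma$ generated by $S$. Then the additive group $\mathbb Z\langle X\rangle/I$ is isomorphic to \[\Gamma/(\Gamma\cdot S)\;\oplus\bigoplus_{s\ge1;\ i_1\le\dots\le i_s}(x_{i_1}\cdots x_{i_s}\Gamma)/(x_{i_1}\cdots x_{i_s}\Gamma\cdot S),\] and for all $s\ge1$, $i_1\le\dots\le i_s$, the group $(x_{i_1}\cdots x_{i_s}\Gamma)/(x_{i_1}\cdots x_{i_s}\Gamma\cdot S)$ is isomorphic to $\Gamma/(\Gamma\cdot S)$ via the isomorphism induced by $f\mapsto x_{i_1}\cdots x_{i_s}f$ ($f\in\Gamma$).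
   Context: $\Gamma$ is the unital subring of $\mathbb Z\langle X\rangle$ generated by all left-normed commutators $[x_{i_1},\dots,x_{i_l}]$ with $l\ge2$ (where $[a,b]=ab-ba$, $[a_1,\dots,a_n]=[[a_1,\dots,a_{n-1}],a_n]$). *)

theory Defs
  imports "HOL-Algebra.Algebra"
begin

text \<open>An element of Z<X> is an integer-valued function on words (lists of variable
  indices) with finite support; the word [i1,...,is] stands for x_i1 ... x_is.\<close>

type_synonym ncpoly = "nat list \<Rightarrow> int"

definition ZX :: "ncpoly set" where
  "ZX = {f. finite {w. f w \<noteq> 0}}"

definition nc_add :: "ncpoly \<Rightarrow> ncpoly \<Rightarrow> ncpoly" where
  "nc_add f g = (\<lambda>w. f w + g w)"

definition nc_neg :: "ncpoly \<Rightarrow> ncpoly" where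
  "nc_neg f = (\<lambda>w. - f w)"

definition nc_zero :: ncpoly where
  "nc_zero = (\<lambda>w. 0)"

definition nc_one :: ncpoly where
  "nc_one = (\<lambda>w. if w = [] then 1 else 0)"

definition nc_mult :: "ncpoly \<Rightarrow> ncpoly \<Rightarrow> ncpoly" where
  "nc_mult f g = (\<lambda>w. \<Sum>k\<le>length w. f (take k w) * g (drop k w))"

definition nc_mono :: "nat list \<Rightarrow> ncpoly" where
  "nc_mono u = (\<lambda>w. if w = u then 1 else 0)"

definition nc_var :: "nat \<Rightarrow> ncpoly" where
  "nc_var i = nc_mono [i]"

definition nc_comm :: "ncpoly \<Rightarrow> ncpoly \<Rightarrow> ncpoly" where
  "nc_comm a b = nc_add (nc_mult a b) (nc_neg (nc_mult b a))"

text \<open>Left-normed commutator [x_i1, ..., x_il] (list of indices, length l \<ge> 2):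
  [a_1,...,a_n] = [[a_1,...,a_(n-1)], a_n].\<close>
definition left_comm :: "nat list \<Rightarrow> ncpoly" where
  "left_comm is = foldl (\<lambda>c i. nc_comm c (nc_var i)) (nc_var (hd is)) (tl is)"

inductive_set Gamma :: "ncpoly set" where
  Gamma_comm: "length is \<ge> 2 \<Longrightarrow> left_comm is \<in> Gamma"
| Gamma_one: "nc_one \<in> Gamma"
| Gamma_add: "f \<in> Gamma \<Longrightarrow> g \<in> Gamma \<Longrightarrow> nc_add f g \<in> Gamma"
| Gamma_neg: "f \<in> Gamma \<Longrightarrow> nc_neg f \<in> Gamma"
| Gamma_mult: "f \<in> Gamma \<Longrightarrow> g \<in> Gamma \<Longrightarrow> nc_mult f g \<in> Gamma"

inductive_set left_ideal_gen :: "ncpoly set \<Rightarrow> ncpoly set \<Rightarrow> ncpoly set"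
  for R :: "ncpoly set" and S :: "ncpoly set" where
  lig_gen: "s \<in> S \<Longrightarrow> s \<in> left_ideal_gen R S"
| lig_zero: "nc_zero \<in> left_ideal_gen R S"
| lig_add: "f \<in> left_ideal_gen R S \<Longrightarrow> g \<in> left_ideal_gen R S \<Longrightarrow> nc_add f g \<in> left_ideal_gen R S"
| lig_neg: "f \<in> left_ideal_gen R S \<Longrightarrow> nc_neg f \<in> left_ideal_gen R S"
| lig_lmult: "r \<in> R \<Longrightarrow> f \<in> left_ideal_gen R S \<Longrightarrow> nc_mult r f \<in> left_ideal_gen R S"

definition add_grp :: "ncpoly set \<Rightarrow> ncpoly monoid" where
  "add_grp A = \<lparr>carrier = A, monoid.mult = nc_add, one = nc_zero\<rparr>"

definition lmult_set :: "nat list \<Rightarrow> ncpoly set \<Rightarrow> ncpoly set" where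
  "lmult_set u A = (\<lambda>f. nc_mult (nc_mono u) f) ` A"

text \<open>Index set of the direct sum: nonempty nondecreasing sequences i_1 \<le> ... \<le> i_s.\<close>
definition sorted_words :: "nat list set" where
  "sorted_words = {u. u \<noteq> [] \<and> sorted u}"

end

theory Submission
  imports Defs "HOL-Library.Function_Algebras" "HOL-Library.Multiset"
begin


definition splits :: "nat list \<Rightarrow> (nat list \<times> nat list) set" where
  "splits w = {(p,q). p @ q = w}"

definition splits3 :: "nat list \<Rightarrow> (nat list \<times> nat list \<times> nat list) set" where
  "splits3 w = {(a,b,c). a @ b @ c = w}"

lemma splits_eq: "splits w = (\<lambda>k. (take k w, drop k w)) ` {..length w}"
  unfolding splits_def
proof (safe)
  fix p q assume "w = p @ q"
  then show "(p, q) \<in> (\<lambda>k. (take k (p@q), drop k (p@q))) ` {..length (p@q)}"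
    by (intro image_eqI[where x="length p"]) auto
qed auto

lemma finite_splits[simp]: "finite (splits w)"
  by (simp add: splits_eq)

lemma finite_splits3[simp]: "finite (splits3 w)"
proof -
  have "splits3 w \<subseteq> (\<lambda>((a,r),(b,c)). (a,b,c)) ` (SIGMA x:splits w. splits (snd x))"
    unfolding splits3_def splits_def
    by (auto simp: image_iff)
  moreover have "finite (SIGMA x:splits w. splits (snd x))" by auto
  ultimately show ?thesis by (rule finite_subset[OF _ finite_imageI])
qed

lemma nc_mult_splits: "nc_mult f g w = (\<Sum>(p,q)\<in>splits w. f p * g q)"
proof -
  have inj: "inj_on (\<lambda>k. (take k w, drop k w)) {..length w}"
    by (auto simp: inj_on_def) (metis length_take min_absorb2)
  show ?thesis unfolding nc_mult_def splits_eq
    by (simp add: sum.reindex[OF inj])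
qed

lemma sum_splits_left:
  "(\<Sum>(p,q)\<in>splits w. \<Sum>(a,b)\<in>splits p. F a b q) = (\<Sum>(a,b,c)\<in>splits3 w. F a b c)"
proof -
  have "(\<Sum>(p,q)\<in>splits w. \<Sum>(a,b)\<in>splits p. F a b q)
      = (\<Sum>(x,y)\<in>(SIGMA x:splits w. splits (fst x)). F (fst y) (snd y) (snd x))"
    by (subst sum.Sigma[symmetric]) (auto simp: case_prod_beta)
  also have "\<dots> = (\<Sum>(a,b,c)\<in>splits3 w. F a b c)"
    by (rule sum.reindex_bij_witness[where i="\<lambda>(a,b,c). ((a@b,c),(a,b))" and j="\<lambda>((p,q),(a,b)). (a,b,q)"])
       (auto simp: splits_def splits3_def)
  finally show ?thesis .
qed

lemma sum_splits_right:
  "(\<Sum>(p,q)\<in>splits w. \<Sum>(b,c)\<in>splits q. F p b c) = (\<Sum>(a,b,c)\<in>splits3 w. F a b c)"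
proof -
  have "(\<Sum>(p,q)\<in>splits w. \<Sum>(b,c)\<in>splits q. F p b c)
      = (\<Sum>(x,y)\<in>(SIGMA x:splits w. splits (snd x)). F (fst x) (fst y) (snd y))"
    by (subst sum.Sigma[symmetric]) (auto simp: case_prod_beta)
  also have "\<dots> = (\<Sum>(a,b,c)\<in>splits3 w. F a b c)"
    by (rule sum.reindex_bij_witness[where i="\<lambda>(a,b,c). ((a,b@c),(b,c))" and j="\<lambda>((p,q),(b,c)). (p,b,c)"])
       (auto simp: splits_def splits3_def)
  finally show ?thesis .
qed

lemma nc_mult_assoc: "nc_mult (nc_mult f g) h = nc_mult f (nc_mult g h)"
proof
  fix w
  have "nc_mult (nc_mult f g) h w = (\<Sum>(p,q)\<in>splits w. \<Sum>(a,b)\<in>splits p. f a * g b * h q)"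
    by (simp add: nc_mult_splits sum_distrib_right case_prod_beta)
  also have "\<dots> = (\<Sum>(a,b,c)\<in>splits3 w. f a * g b * h c)" by (rule sum_splits_left)
  also have "\<dots> = (\<Sum>(p,q)\<in>splits w. \<Sum>(b,c)\<in>splits q. f p * (g b * h c))"
    by (subst sum_splits_right) (simp add: mult.assoc)
  also have "\<dots> = nc_mult f (nc_mult g h) w"
    by (simp add: nc_mult_splits sum_distrib_left case_prod_beta)
  finally show "nc_mult (nc_mult f g) h w = nc_mult f (nc_mult g h) w" .
qed

lemma nc_add_eq: "nc_add f g = f + g" by (simp add: nc_add_def plus_fun_def)
lemma nc_neg_eq: "nc_neg f = - f" by (simp add: nc_neg_def fun_Compl_def)
lemma nc_zero_eq: "nc_zero = 0" by (simp add: nc_zero_def zero_fun_def)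

definition sc :: "int \<Rightarrow> ncpoly \<Rightarrow> ncpoly" where "sc k f = (\<lambda>w. k * f w)"

lemma nc_mult_add_left: "nc_mult (f + g) h = nc_mult f h + nc_mult g h"
  by (rule ext) (simp add: nc_mult_def distrib_right sum.distrib)
lemma nc_mult_add_right: "nc_mult f (g + h) = nc_mult f g + nc_mult f h"
  by (rule ext) (simp add: nc_mult_def distrib_left sum.distrib)
lemma nc_mult_zero_left[simp]: "nc_mult 0 h = 0"
  by (rule ext) (simp add: nc_mult_def)
lemma nc_mult_zero_right[simp]: "nc_mult f 0 = 0"
  by (rule ext) (simp add: nc_mult_def)
lemma nc_mult_neg_left: "nc_mult (- f) h = - nc_mult f h"
  by (rule ext) (simp add: nc_mult_def sum_negf)
lemma nc_mult_neg_right: "nc_mult f (- h) = - nc_mult f h"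
  by (rule ext) (simp add: nc_mult_def sum_negf)
lemma nc_mult_diff_left: "nc_mult (f - g) h = nc_mult f h - nc_mult g h"
  by (simp only: diff_conv_add_uminus nc_mult_add_left nc_mult_neg_left)
lemma nc_mult_diff_right: "nc_mult f (g - h) = nc_mult f g - nc_mult f h"
  by (simp only: diff_conv_add_uminus nc_mult_add_right nc_mult_neg_right)
lemma nc_mult_sum_left: "nc_mult (\<Sum>a\<in>A. F a) h = (\<Sum>a\<in>A. nc_mult (F a) h)"
proof (induction A rule: infinite_finite_induct)
  case (infinite A) then show ?case by (simp only: sum.infinite[OF infinite] nc_mult_zero_left)
next
  case empty then show ?case by (simp only: sum.empty nc_mult_zero_left)
next
  case (insert x A) then show ?case by (simp only: sum.insert[OF insert(1,2)] nc_mult_add_left insert(3))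
qed
lemma nc_mult_sum_right: "nc_mult h (\<Sum>a\<in>A. F a) = (\<Sum>a\<in>A. nc_mult h (F a))"
proof (induction A rule: infinite_finite_induct)
  case (infinite A) then show ?case by (simp only: sum.infinite[OF infinite] nc_mult_zero_right)
next
  case empty then show ?case by (simp only: sum.empty nc_mult_zero_right)
next
  case (insert x A) then show ?case by (simp only: sum.insert[OF insert(1,2)] nc_mult_add_right insert(3))
qed
lemma nc_mult_sc_left: "nc_mult (sc k f) h = sc k (nc_mult f h)"
  by (rule ext) (simp add: nc_mult_def sc_def sum_distrib_left mult.left_commute mult.assoc)
lemma nc_mult_sc_right: "nc_mult f (sc k h) = sc k (nc_mult f h)"
  by (rule ext) (simp add: nc_mult_def sc_def sum_distrib_left mult.left_commute mult.assoc)

lemma nc_mono_mult_apply: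
  "nc_mult (nc_mono a) f w = (if take (length a) w = a then f (drop (length a) w) else 0)"
proof -
  have "nc_mult (nc_mono a) f w = (\<Sum>x\<in>splits w. if x = (a, drop (length a) w) then f (drop (length a) w) else 0)"
    unfolding nc_mult_splits
    by (rule sum.cong) (auto simp: nc_mono_def splits_def split: if_splits)
  also have "\<dots> = (if take (length a) w = a then f (drop (length a) w) else 0)"
    by (subst sum.delta[OF finite_splits]) (auto simp: splits_def append_eq_conv_conj)
  finally show ?thesis .
qed

lemma nc_mono_Nil: "nc_mono [] = nc_one"
  by (simp add: nc_mono_def nc_one_def)

lemma nc_mult_one_left[simp]: "nc_mult nc_one f = f"
  by (rule ext) (simp add: nc_mono_Nil[symmetric] nc_mono_mult_apply)

lemma nc_mult_one_right[simp]: "nc_mult f nc_one = f"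
proof
  fix w
  have "nc_mult f nc_one w = (\<Sum>x\<in>splits w. if x = (w, []) then f w else 0)"
    unfolding nc_mult_splits
    by (rule sum.cong) (auto simp: nc_one_def splits_def)
  also have "\<dots> = f w" by (subst sum.delta[OF finite_splits]) (auto simp: splits_def)
  finally show "nc_mult f nc_one w = f w" .
qed

lemma nc_mono_mult: "nc_mult (nc_mono a) (nc_mono b) = nc_mono (a @ b)"
  apply (rule ext)
  apply (simp only: nc_mono_mult_apply)
  apply (auto simp: nc_mono_def)
  by (metis append_take_drop_id)

lemma nc_mono_mult_inj:
  assumes "nc_mult (nc_mono u) f = nc_mult (nc_mono u) g" shows "f = g"
proof
  fix v
  have "nc_mult (nc_mono u) f (u @ v) = nc_mult (nc_mono u) g (u @ v)" using assms by simp
  then show "f v = g v" by (simp add: nc_mono_mult_apply)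
qed

lemma ZX_add: "f \<in> ZX \<Longrightarrow> g \<in> ZX \<Longrightarrow> f + g \<in> ZX"
proof -
  assume a: "f \<in> ZX" "g \<in> ZX"
  have "{w. (f + g) w \<noteq> 0} \<subseteq> {w. f w \<noteq> 0} \<union> {w. g w \<noteq> 0}" by auto
  then show ?thesis using a unfolding ZX_def by (auto intro: finite_subset)
qed
lemma ZX_neg: "f \<in> ZX \<Longrightarrow> - f \<in> ZX"
  unfolding ZX_def by simp
lemma ZX_zero: "0 \<in> ZX"
  unfolding ZX_def by simp
lemma ZX_diff: "f \<in> ZX \<Longrightarrow> g \<in> ZX \<Longrightarrow> f - g \<in> ZX"
  using ZX_add ZX_neg by (metis diff_conv_add_uminus)
lemma ZX_mono: "nc_mono u \<in> ZX"
proof -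
  have "{w. nc_mono u w \<noteq> 0} \<subseteq> {u}" by (auto simp: nc_mono_def)
  then show ?thesis unfolding ZX_def by (auto intro: finite_subset)
qed
lemma ZX_one: "nc_one \<in> ZX"
  using ZX_mono[of "[]"] by (simp add: nc_mono_Nil)
lemma ZX_sc: "f \<in> ZX \<Longrightarrow> sc k f \<in> ZX"
proof -
  assume a: "f \<in> ZX"
  have "{w. sc k f w \<noteq> 0} \<subseteq> {w. f w \<noteq> 0}" by (auto simp: sc_def)
  then show ?thesis using a unfolding ZX_def by (auto intro: finite_subset)
qed
lemma ZX_sum: "(\<And>a. a \<in> A \<Longrightarrow> F a \<in> ZX) \<Longrightarrow> (\<Sum>a\<in>A. F a) \<in> ZX"
proof (induction A rule: infinite_finite_induct)
  case (infinite A) then show ?case by (simp only: sum.infinite[OF infinite(1)] ZX_zero)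
next
  case empty then show ?case by (simp only: sum.empty ZX_zero)
next
  case (insert x A) then show ?case by (simp only: sum.insert[OF insert(1,2)]) (rule ZX_add, auto)
qed
lemma ZX_mult:
  assumes "f \<in> ZX" "g \<in> ZX" shows "nc_mult f g \<in> ZX"
proof -
  have "{w. nc_mult f g w \<noteq> 0} \<subseteq> (\<lambda>(p,q). p @ q) ` ({w. f w \<noteq> 0} \<times> {w. g w \<noteq> 0})"
  proof
    fix w assume "w \<in> {w. nc_mult f g w \<noteq> 0}"
    then obtain x where "x \<in> splits w" "(case x of (p,q) \<Rightarrow> f p * g q) \<noteq> 0"
      by (auto simp: nc_mult_splits elim: sum.not_neutral_contains_not_neutral)
    then show "w \<in> (\<lambda>(p,q). p @ q) ` ({w. f w \<noteq> 0} \<times> {w. g w \<noteq> 0})"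
      by (auto simp: splits_def)
  qed
  moreover have "finite ({w. f w \<noteq> 0} \<times> {w. g w \<noteq> 0})" using assms by (auto simp: ZX_def)
  ultimately show ?thesis unfolding ZX_def by (auto intro: finite_subset)
qed

lemma sum_apply: "(\<Sum>a\<in>A. F a) x = (\<Sum>a\<in>A. (F a x :: int))"
  by (induction A rule: infinite_finite_induct) simp_all

lemma sc_mono_apply: "sc k (nc_mono w) = (\<lambda>v. if v = w then k else 0)"
  by (auto simp: sc_def nc_mono_def)

lemma ZX_expand:
  assumes "f \<in> ZX" shows "f = (\<Sum>w\<in>{w. f w \<noteq> 0}. sc (f w) (nc_mono w))"
proof
  fix v
  have fin: "finite {w. f w \<noteq> 0}" using assms by (simp add: ZX_def)
  have "(\<Sum>w\<in>{w. f w \<noteq> 0}. sc (f w) (nc_mono w)) v = (\<Sum>w\<in>{w. f w \<noteq> 0}. if v = w then f w else 0)"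
    by (simp add: sum_apply sc_mono_apply) 
  also have "\<dots> = f v" using fin by (simp add: sum.delta)
  finally show "f v = (\<Sum>w\<in>{w. f w \<noteq> 0}. sc (f w) (nc_mono w)) v" by simp
qed



lemma nc_comm_eq: "nc_comm a b = nc_mult a b - nc_mult b a"
  by (simp add: nc_comm_def nc_add_eq nc_neg_eq)

lemma ZX_comm: "a \<in> ZX \<Longrightarrow> b \<in> ZX \<Longrightarrow> nc_comm a b \<in> ZX"
  by (simp add: nc_comm_eq ZX_diff ZX_mult)

lemma ZX_var: "nc_var i \<in> ZX" by (simp add: nc_var_def ZX_mono)

lemma ZX_foldl: "c \<in> ZX \<Longrightarrow> foldl (\<lambda>c i. nc_comm c (nc_var i)) c is \<in> ZX"
  by (induction "is" arbitrary: c) (auto simp: ZX_comm ZX_var)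

lemma ZX_left_comm: "left_comm is \<in> ZX"
  by (simp add: left_comm_def ZX_foldl ZX_var)

lemma Gamma_ZX: "f \<in> Gamma \<Longrightarrow> f \<in> ZX"
proof (induction rule: Gamma.induct)
  case (Gamma_add f g) show ?case by (simp only: nc_add_eq) (rule ZX_add[OF Gamma_add.IH])
next
  case (Gamma_neg f) show ?case by (simp only: nc_neg_eq) (rule ZX_neg[OF Gamma_neg.IH])
qed (auto simp: ZX_left_comm ZX_one ZX_mult)

lemma Gamma_add': "f \<in> Gamma \<Longrightarrow> g \<in> Gamma \<Longrightarrow> f + g \<in> Gamma"
  using Gamma_add by (simp add: nc_add_eq)
lemma Gamma_neg': "f \<in> Gamma \<Longrightarrow> - f \<in> Gamma"
  using Gamma_neg by (simp add: nc_neg_eq)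
lemma Gamma_zero: "0 \<in> Gamma"
proof -
  have "nc_one + - nc_one \<in> Gamma" by (intro Gamma_add' Gamma_neg' Gamma_one)
  then show ?thesis by simp
qed
lemma Gamma_diff: "f \<in> Gamma \<Longrightarrow> g \<in> Gamma \<Longrightarrow> f - g \<in> Gamma"
  by (metis Gamma_add' Gamma_neg' diff_conv_add_uminus)
lemma Gamma_sum: "(\<And>a. a \<in> A \<Longrightarrow> F a \<in> Gamma) \<Longrightarrow> (\<Sum>a\<in>A. F a) \<in> Gamma"
proof (induction A rule: infinite_finite_induct)
  case (infinite A) then show ?case by (simp only: sum.infinite[OF infinite(1)] Gamma_zero)
next
  case empty then show ?case by (simp only: sum.empty Gamma_zero)
next
  case (insert x A) then show ?case by (simp only: sum.insert[OF insert(1,2)]) (rule Gamma_add', auto)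
qed
lemma Gamma_sc_nat: "f \<in> Gamma \<Longrightarrow> sc (int n) f \<in> Gamma"
proof (induction n)
  case 0
  have e: "sc (int 0) f = 0" by (simp add: sc_def zero_fun_def)
  show ?case unfolding e by (rule Gamma_zero)
next
  case (Suc n)
  have e: "sc (int (Suc n)) f = sc (int n) f + f" by (rule ext) (simp add: sc_def algebra_simps)
  show ?case unfolding e by (rule Gamma_add'[OF Suc.IH[OF Suc.prems] Suc.prems])
qed
lemma Gamma_sc: "f \<in> Gamma \<Longrightarrow> sc k f \<in> Gamma"
proof (cases "k \<ge> 0")
  case True
  then show "f \<in> Gamma \<Longrightarrow> sc k f \<in> Gamma" using Gamma_sc_nat[of f "nat k"] by simp
next
  case False
  assume f: "f \<in> Gamma"
  have e: "sc k f = - sc (int (nat (- k))) f" using False by (intro ext) (simp add: sc_def)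
  show ?thesis unfolding e by (rule Gamma_neg'[OF Gamma_sc_nat[OF f]])
qed
lemma Gamma_mult': "f \<in> Gamma \<Longrightarrow> g \<in> Gamma \<Longrightarrow> nc_mult f g \<in> Gamma"
  by (rule Gamma_mult)

lemma left_comm_snoc: "is \<noteq> [] \<Longrightarrow> left_comm (is @ [j]) = nc_comm (left_comm is) (nc_var j)"
  by (cases "is") (simp_all add: left_comm_def)

lemma left_comm_two: "left_comm [j, i] = nc_comm (nc_var j) (nc_var i)"
  by (simp add: left_comm_def)

definition Comms :: "ncpoly set" where
  "Comms = {left_comm is | is. length is \<ge> 2}"

lemma Comms_Gamma: "c \<in> Comms \<Longrightarrow> c \<in> Gamma"
  by (auto simp: Comms_def intro: Gamma_comm)

lemma Comms_snoc: "c \<in> Comms \<Longrightarrow> nc_comm c (nc_var j) \<in> Comms"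
proof -
  assume "c \<in> Comms"
  then obtain "is" where i: "c = left_comm is" "length is \<ge> 2" by (auto simp: Comms_def)
  then have "is \<noteq> []" by auto
  then show ?thesis unfolding Comms_def using i
    by (intro CollectI exI[of _ "is @ [j]"]) (auto simp: left_comm_snoc)
qed

lemma Comms_two: "left_comm [j, i] \<in> Comms"
  unfolding Comms_def by auto

definition Aof :: "ncpoly \<Rightarrow> ncpoly set" where
  "Aof \<rho> = {nc_mult \<delta> \<rho> | \<delta>. \<delta> \<in> Gamma}"

definition DEC :: "ncpoly set \<Rightarrow> ncpoly \<Rightarrow> bool" where
  "DEC A f \<longleftrightarrow> (\<exists>F d. finite F \<and> (\<forall>u\<in>F. sorted u \<and> d u \<in> A) \<and>
                  f = (\<Sum>u\<in>F. nc_mult (nc_mono u) (d u)))"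

definition subgrp :: "ncpoly set \<Rightarrow> bool" where
  "subgrp A \<longleftrightarrow> 0 \<in> A \<and> (\<forall>x\<in>A. \<forall>y\<in>A. x + y \<in> A) \<and> (\<forall>x\<in>A. - x \<in> A)"

lemma subgrp_Aof: "subgrp (Aof \<rho>)"
  unfolding subgrp_def Aof_def
proof (intro conjI ballI)
  show "0 \<in> {nc_mult \<delta> \<rho> |\<delta>. \<delta> \<in> Gamma}" using Gamma_zero by (auto intro!: exI[of _ 0])
next
  fix x y assume "x \<in> {nc_mult \<delta> \<rho> |\<delta>. \<delta> \<in> Gamma}" "y \<in> {nc_mult \<delta> \<rho> |\<delta>. \<delta> \<in> Gamma}"
  then obtain a b where "a \<in> Gamma" "b \<in> Gamma" "x = nc_mult a \<rho>" "y = nc_mult b \<rho>" by auto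
  then show "x + y \<in> {nc_mult \<delta> \<rho> |\<delta>. \<delta> \<in> Gamma}"
    by (auto simp: nc_mult_add_left[symmetric] intro!: exI[of _ "a + b"] Gamma_add')
next
  fix x assume "x \<in> {nc_mult \<delta> \<rho> |\<delta>. \<delta> \<in> Gamma}"
  then obtain a where "a \<in> Gamma" "x = nc_mult a \<rho>" by auto
  then show "- x \<in> {nc_mult \<delta> \<rho> |\<delta>. \<delta> \<in> Gamma}"
    by (auto simp: nc_mult_neg_left[symmetric] intro!: exI[of _ "- a"] Gamma_neg')
qed

lemma subgrp_Gamma: "subgrp Gamma"
  unfolding subgrp_def by (auto intro: Gamma_zero Gamma_add' Gamma_neg')

lemma Aof_mult: "c \<in> Gamma \<Longrightarrow> Aof (nc_mult c \<rho>) \<subseteq> Aof \<rho>"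
  unfolding Aof_def by (auto simp: nc_mult_assoc[symmetric] intro: Gamma_mult)

lemma Aof_one: "Aof nc_one = Gamma"
  unfolding Aof_def by auto

lemma DEC_zero: "DEC A 0"
  unfolding DEC_def by (intro exI[of _ "{}"]) auto

lemma DEC_mono: "A \<subseteq> B \<Longrightarrow> DEC A f \<Longrightarrow> DEC B f"
  unfolding DEC_def by blast

lemma DEC_single: "sorted u \<Longrightarrow> a \<in> A \<Longrightarrow> DEC A (nc_mult (nc_mono u) a)"
  unfolding DEC_def by (intro exI[of _ "{u}"] exI[of _ "\<lambda>_. a"]) auto

lemma sum_restrict_mono:
  assumes "finite G" "F \<subseteq> G"
  shows "(\<Sum>u\<in>G. nc_mult (nc_mono u) (if u \<in> F then d u else 0)) = (\<Sum>u\<in>F. nc_mult (nc_mono u) (d u))"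
proof -
  have "(\<Sum>u\<in>G. nc_mult (nc_mono u) (if u \<in> F then d u else 0)) = (\<Sum>u\<in>G. if u \<in> F then nc_mult (nc_mono u) (d u) else 0)"
    by (rule sum.cong) auto
  also have "\<dots> = (\<Sum>u\<in>G \<inter> F. nc_mult (nc_mono u) (d u))"
    using assms(1) by (rule sum.inter_restrict[symmetric])
  also have "G \<inter> F = F" using assms(2) by auto
  finally show ?thesis .
qed

lemma DEC_add:
  assumes A: "subgrp A" and f: "DEC A f" and g: "DEC A g" shows "DEC A (f + g)"
proof -
  obtain F d where F: "finite F" "\<forall>u\<in>F. sorted u \<and> d u \<in> A" "f = (\<Sum>u\<in>F. nc_mult (nc_mono u) (d u))"
    using f unfolding DEC_def by blast
  obtain G e where G: "finite G" "\<forall>u\<in>G. sorted u \<and> e u \<in> A" "g = (\<Sum>u\<in>G. nc_mult (nc_mono u) (e u))"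
    using g unfolding DEC_def by blast
  define h where "h u = (if u \<in> F then d u else 0) + (if u \<in> G then e u else 0)" for u
  have "f + g = (\<Sum>u\<in>F \<union> G. nc_mult (nc_mono u) (if u \<in> F then d u else 0)) +
                (\<Sum>u\<in>F \<union> G. nc_mult (nc_mono u) (if u \<in> G then e u else 0))"
    using F G by (simp add: sum_restrict_mono)
  also have "\<dots> = (\<Sum>u\<in>F \<union> G. nc_mult (nc_mono u) (h u))"
    by (simp add: h_def nc_mult_add_right sum.distrib)
  finally have eq: "f + g = (\<Sum>u\<in>F \<union> G. nc_mult (nc_mono u) (h u))" .
  have "\<forall>u\<in>F \<union> G. sorted u \<and> h u \<in> A"
    using F(2) G(2) A unfolding h_def subgrp_def by auto
  then show ?thesis unfolding DEC_def using eq F(1) G(1) by blast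
qed

lemma DEC_neg:
  assumes A: "subgrp A" and f: "DEC A f" shows "DEC A (- f)"
proof -
  obtain F d where F: "finite F" "\<forall>u\<in>F. sorted u \<and> d u \<in> A" "f = (\<Sum>u\<in>F. nc_mult (nc_mono u) (d u))"
    using f unfolding DEC_def by blast
  have "- f = (\<Sum>u\<in>F. nc_mult (nc_mono u) (- d u))"
    unfolding F(3) by (simp only: nc_mult_neg_right sum_negf)
  moreover have "\<forall>u\<in>F. sorted u \<and> - d u \<in> A" using F(2) A unfolding subgrp_def by blast
  ultimately show ?thesis unfolding DEC_def using F(1) by (intro exI[of _ F] exI[of _ "\<lambda>u. - d u"]) blast
qed

lemma DEC_sum:
  assumes A: "subgrp A" shows "(\<And>a. a \<in> T \<Longrightarrow> DEC A (F a)) \<Longrightarrow> DEC A (\<Sum>a\<in>T. F a)"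
proof (induction T rule: infinite_finite_induct)
  case (infinite T) then show ?case by (simp only: sum.infinite[OF infinite(1)] DEC_zero)
next
  case empty then show ?case by (simp only: sum.empty DEC_zero)
next
  case (insert x T) then show ?case by (simp only: sum.insert[OF insert(1,2)]) (rule DEC_add[OF A], auto)
qed



lemma unsorted_descent: "\<not> sorted w \<Longrightarrow> \<exists>a i j b. w = a @ [j, i] @ b \<and> i < (j::nat)"
proof (induction w)
  case Nil then show ?case by simp
next
  case (Cons x xs)
  show ?case
  proof (cases xs)
    case Nil then show ?thesis using Cons.prems by simp
  next
    case (Cons y zs)
    show ?thesis
    proof (cases "y < x")
      case True then show ?thesis using Cons by (intro exI[of _ "[]"]) auto
    next
      case False
      then have "\<not> sorted xs" using Cons.prems \<open>xs = y # zs\<close> by (metis sorted2 not_less)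
      then obtain a i j b where "xs = a @ [j, i] @ b" "i < j" using Cons.IH by blast
      then show ?thesis by (intro exI[of _ "x # a"]) auto
    qed
  qed
qed

lemma nc_mono_mult_assoc: "nc_mult (nc_mono a) (nc_mult (nc_mono b) Z) = nc_mult (nc_mono (a @ b)) Z"
  by (simp add: nc_mult_assoc[symmetric] nc_mono_mult)

lemma var_swap: "nc_mult c (nc_var j) = nc_mult (nc_var j) c + nc_comm c (nc_var j)"
  by (simp add: nc_comm_eq)

lemma mono_swap: "nc_mono [j, i] = nc_mono [i, j] + left_comm [j, i]"
proof -
  have "left_comm [j, i] = nc_mono [j, i] - nc_mono [i, j]"
    by (simp add: left_comm_two nc_comm_eq nc_var_def nc_mono_mult)
  then show ?thesis by simp
qed

lemma lenlex_shorter: "length v < length w \<Longrightarrow> (v, w) \<in> lenlex less_than"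
  by (simp add: lenlex_conv)

lemma lenlex_swap: "i < j \<Longrightarrow> (a @ [i, j] @ b, a @ [j, i] @ b) \<in> lenlex less_than"
  by (simp add: lenlex_conv lex_append_leftI)

lemma SPAN: "DEC (Aof \<rho>) (nc_mult (nc_mono w) \<rho>)"
proof (induction w arbitrary: \<rho> rule: wf_induct[OF wf_lenlex[OF wf_less_than]])
  case (1 w)
  have IH: "DEC (Aof \<rho>) (nc_mult (nc_mono v) \<rho>)" if "length v < length w" for v \<rho>
    using 1[rule_format, OF lenlex_shorter[OF that]] by blast
  have COMM: "\<And>a c \<rho>. length a + length b < length w \<Longrightarrow> c \<in> Comms \<Longrightarrow>
      DEC (Aof \<rho>) (nc_mult (nc_mono a) (nc_mult c (nc_mult (nc_mono b) \<rho>)))" for b :: "nat list"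
  proof (induction b)
    case Nil
    fix a :: "nat list" and c \<rho>
    assume l: "length a + length ([]::nat list) < length w" and c: "c \<in> Comms"
    have "DEC (Aof (nc_mult c \<rho>)) (nc_mult (nc_mono a) (nc_mult c \<rho>))" using l by (intro IH) simp
    then have "DEC (Aof \<rho>) (nc_mult (nc_mono a) (nc_mult c \<rho>))"
      by (rule DEC_mono[OF Aof_mult[OF Comms_Gamma[OF c]]])
    then show "DEC (Aof \<rho>) (nc_mult (nc_mono a) (nc_mult c (nc_mult (nc_mono []) \<rho>)))"
      by (simp add: nc_mono_Nil)
  next
    case (Cons j b')
    fix a :: "nat list" and c \<rho>
    assume l: "length a + length (j # b') < length w" and c: "c \<in> Comms"
    define Y where "Y = nc_mult (nc_mono b') \<rho>"
    have "nc_mult (nc_mono a) (nc_mult c (nc_mult (nc_mono (j # b')) \<rho>))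
        = nc_mult (nc_mono a) (nc_mult (nc_mult c (nc_var j)) Y)"
      using nc_mono_mult_assoc[of "[j]" b' \<rho>]
      by (simp add: Y_def nc_var_def nc_mult_assoc)
    also have "\<dots> = nc_mult (nc_mono (a @ [j])) (nc_mult c Y) + nc_mult (nc_mono a) (nc_mult (nc_comm c (nc_var j)) Y)"
      unfolding var_swap nc_mult_add_left nc_mult_add_right
      by (simp add: nc_mult_assoc nc_var_def nc_mono_mult_assoc)
    finally have eq: "nc_mult (nc_mono a) (nc_mult c (nc_mult (nc_mono (j # b')) \<rho>))
        = nc_mult (nc_mono (a @ [j])) (nc_mult c Y) + nc_mult (nc_mono a) (nc_mult (nc_comm c (nc_var j)) Y)" .
    show "DEC (Aof \<rho>) (nc_mult (nc_mono a) (nc_mult c (nc_mult (nc_mono (j # b')) \<rho>)))"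
      unfolding eq Y_def
    proof (rule DEC_add[OF subgrp_Aof])
      show "DEC (Aof \<rho>) (nc_mult (nc_mono (a @ [j])) (nc_mult c (nc_mult (nc_mono b') \<rho>)))"
        by (rule Cons.IH) (use l c in simp_all)
      show "DEC (Aof \<rho>) (nc_mult (nc_mono a) (nc_mult (nc_comm c (nc_var j)) (nc_mult (nc_mono b') \<rho>)))"
        by (rule Cons.IH) (use l Comms_snoc[OF c] in simp_all)
    qed
  qed
  show ?case
  proof (cases "sorted w")
    case True
    have "nc_mult (nc_mono w) \<rho> = nc_mult (nc_mono w) (nc_mult nc_one \<rho>)" by simp
    moreover have "nc_mult nc_one \<rho> \<in> Aof \<rho>" unfolding Aof_def using Gamma_one by blast
    ultimately show ?thesis using DEC_single[OF True, of "nc_mult nc_one \<rho>" "Aof \<rho>"] by simp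
  next
    case False
    then obtain a i j b where w: "w = a @ [j, i] @ b" "i < j" using unsorted_descent by blast
    have "nc_mult (nc_mono w) \<rho> = nc_mult (nc_mono a) (nc_mult (nc_mono [j, i]) (nc_mult (nc_mono b) \<rho>))"
      by (simp add: w nc_mono_mult_assoc)
    also have "\<dots> = nc_mult (nc_mono (a @ [i, j] @ b)) \<rho> + nc_mult (nc_mono a) (nc_mult (left_comm [j, i]) (nc_mult (nc_mono b) \<rho>))"
      unfolding mono_swap[of j i] nc_mult_add_left nc_mult_add_right
      by (simp add: nc_mono_mult_assoc)
    finally have eq: "nc_mult (nc_mono w) \<rho> = \<dots>" .
    show ?thesis unfolding eq
    proof (rule DEC_add[OF subgrp_Aof])
      show "DEC (Aof \<rho>) (nc_mult (nc_mono (a @ [i, j] @ b)) \<rho>)"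
        using 1[rule_format, OF lenlex_swap[OF w(2), of a b, folded w(1)]] by simp
      show "DEC (Aof \<rho>) (nc_mult (nc_mono a) (nc_mult (left_comm [j, i]) (nc_mult (nc_mono b) \<rho>)))"
        by (rule COMM) (simp_all add: w Comms_two)
    qed
  qed
qed



definition der :: "nat \<Rightarrow> ncpoly \<Rightarrow> ncpoly" where
  "der i f = (\<lambda>w. \<Sum>(a,b)\<in>splits w. f (a @ i # b))"

lemma der_add: "der i (f + g) = der i f + der i g"
  by (rule ext) (simp add: der_def sum.distrib case_prod_beta)
lemma der_zero[simp]: "der i 0 = 0"
  by (rule ext) (simp add: der_def)
lemma der_neg: "der i (- f) = - der i f"
  by (rule ext) (simp add: der_def sum_negf case_prod_beta)
lemma der_diff: "der i (f - g) = der i f - der i g"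
  by (simp only: diff_conv_add_uminus der_add der_neg)
lemma der_sum: "der i (\<Sum>a\<in>A. F a) = (\<Sum>a\<in>A. der i (F a))"
proof (induction A rule: infinite_finite_induct)
  case (infinite A) then show ?case by (simp only: sum.infinite[OF infinite(1)] der_zero)
next
  case empty then show ?case by (simp only: sum.empty der_zero)
next
  case (insert x A) then show ?case by (simp only: sum.insert[OF insert(1,2)] der_add insert(3))
qed

lemma splits_cons_split:
  "(\<Sum>(p,q)\<in>splits (a @ i # b). H p q) =
     (\<Sum>(a1,a2)\<in>splits a. H a1 (a2 @ i # b)) + (\<Sum>(b1,b2)\<in>splits b. H (a @ i # b1) b2)"
proof -
  define S1 where "S1 = (\<lambda>(a1,a2). (a1, a2 @ i # b)) ` splits a"
  define S2 where "S2 = (\<lambda>(b1,b2). (a @ i # b1, b2)) ` splits b"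
  have U: "splits (a @ i # b) = S1 \<union> S2"
  proof
    show "splits (a @ i # b) \<subseteq> S1 \<union> S2"
    proof
      fix x assume "x \<in> splits (a @ i # b)"
      then obtain p q where x: "x = (p, q)" "p @ q = a @ i # b" by (auto simp: splits_def)
      then obtain us where "p = a @ us \<and> us @ q = i # b \<or> p @ us = a \<and> q = us @ i # b"
        by (auto simp: append_eq_append_conv2)
      then consider "p = a" "q = i # b" | us' where "p = a @ i # us'" "us' @ q = b" | "p @ us = a" "q = us @ i # b"
        by (metis Cons_eq_append_conv append.right_neutral)
      then show "x \<in> S1 \<union> S2"
      proof cases
        case 1 then show ?thesis unfolding S1_def x by (auto simp: splits_def image_iff intro!: bexI[of _ "(a, [])"])
      next
        case 2 then show ?thesis unfolding S2_def x by (auto simp: splits_def image_iff)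
      next
        case 3 then show ?thesis unfolding S1_def x by (auto simp: splits_def image_iff)
      qed
    qed
    show "S1 \<union> S2 \<subseteq> splits (a @ i # b)" unfolding S1_def S2_def by (auto simp: splits_def)
  qed
  have D: "S1 \<inter> S2 = {}"
  proof -
    have "\<forall>x\<in>S1. length (fst x) \<le> length a" unfolding S1_def by (auto simp: splits_def)
    moreover have "\<forall>x\<in>S2. length (fst x) > length a" unfolding S2_def by (auto simp: splits_def)
    ultimately show ?thesis by fastforce
  qed
  have i1: "inj_on (\<lambda>(a1,a2). (a1, a2 @ i # b)) (splits a)" by (auto simp: inj_on_def)
  have i2: "inj_on (\<lambda>(b1,b2). (a @ i # b1, b2)) (splits b)" by (auto simp: inj_on_def)
  have "(\<Sum>(p,q)\<in>splits (a @ i # b). H p q) = (\<Sum>(p,q)\<in>S1. H p q) + (\<Sum>(p,q)\<in>S2. H p q)"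
  proof -
    have f1: "finite S1" "finite S2" unfolding S1_def S2_def by simp_all
    show ?thesis unfolding U by (rule sum.union_disjoint[OF f1 D])
  qed
  also have "(\<Sum>(p,q)\<in>S1. H p q) = (\<Sum>(a1,a2)\<in>splits a. H a1 (a2 @ i # b))"
    unfolding S1_def by (subst sum.reindex[OF i1]) (simp add: case_prod_beta)
  also have "(\<Sum>(p,q)\<in>S2. H p q) = (\<Sum>(b1,b2)\<in>splits b. H (a @ i # b1) b2)"
    unfolding S2_def by (subst sum.reindex[OF i2]) (simp add: case_prod_beta)
  finally show ?thesis .
qed

lemma der_leibniz: "der i (nc_mult f g) = nc_mult (der i f) g + nc_mult f (der i g)"
proof
  fix w
  have "der i (nc_mult f g) w = (\<Sum>(a,b)\<in>splits w. \<Sum>(p,q)\<in>splits (a @ i # b). f p * g q)"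
    by (simp add: der_def nc_mult_splits)
  also have "\<dots> = (\<Sum>(a,b)\<in>splits w. (\<Sum>(a1,a2)\<in>splits a. f a1 * g (a2 @ i # b))
                  + (\<Sum>(b1,b2)\<in>splits b. f (a @ i # b1) * g b2))"
    by (intro sum.cong refl) (auto simp: splits_cons_split[where H="\<lambda>p q. f p * g q"])
  also have "\<dots> = (\<Sum>(a,b)\<in>splits w. (\<Sum>(a1,a2)\<in>splits a. f a1 * g (a2 @ i # b)))
                  + (\<Sum>(a,b)\<in>splits w. (\<Sum>(b1,b2)\<in>splits b. f (a @ i # b1) * g b2))"
    by (simp add: sum.distrib case_prod_beta)
  also have "\<dots> = (\<Sum>(x,y,z)\<in>splits3 w. f x * g (y @ i # z)) + (\<Sum>(x,y,z)\<in>splits3 w. f (x @ i # y) * g z)"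
    by (simp only: sum_splits_left sum_splits_right)
  also have "(\<Sum>(x,y,z)\<in>splits3 w. f (x @ i # y) * g z) = nc_mult (der i f) g w"
  proof -
    have "nc_mult (der i f) g w = (\<Sum>(p,q)\<in>splits w. \<Sum>(a,b)\<in>splits p. f (a @ i # b) * g q)"
      by (simp add: nc_mult_splits der_def sum_distrib_right case_prod_beta)
    then show ?thesis by (simp add: sum_splits_left)
  qed
  also have "(\<Sum>(x,y,z)\<in>splits3 w. f x * g (y @ i # z)) = nc_mult f (der i g) w"
  proof -
    have "nc_mult f (der i g) w = (\<Sum>(p,q)\<in>splits w. \<Sum>(b,c)\<in>splits q. f p * g (b @ i # c))"
      by (simp add: nc_mult_splits der_def sum_distrib_left case_prod_beta)
    then show ?thesis by (simp add: sum_splits_right)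
  qed
  finally show "der i (nc_mult f g) w = (nc_mult (der i f) g + nc_mult f (der i g)) w" by simp
qed

lemma der_one: "der i nc_one = 0"
  by (rule ext) (simp add: der_def nc_one_def)

lemma der_var: "der i (nc_var j) = (if i = j then nc_one else 0)"
proof
  fix w
  have "der i (nc_var j) w = (\<Sum>x\<in>splits w. if x = ([], []) \<and> i = j then 1 else 0)"
    unfolding der_def nc_var_def nc_mono_def by (rule sum.cong) (auto simp: append_eq_Cons_conv)
  also have "\<dots> = (if i = j then nc_one else 0) w"
    by (cases "i = j") (auto simp: nc_one_def sum.delta[OF finite_splits], auto simp: splits_def)
  finally show "der i (nc_var j) w = (if i = j then nc_one else 0) w" .
qed

lemma comm_zero_left: "nc_comm 0 b = 0" by (simp add: nc_comm_eq)
lemma comm_zero_right: "nc_comm a 0 = 0" by (simp add: nc_comm_eq)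
lemma comm_one_left: "nc_comm nc_one b = 0" by (simp add: nc_comm_eq)
lemma comm_one_right: "nc_comm a nc_one = 0" by (simp add: nc_comm_eq)

lemma der_comm: "der i (nc_comm a b) = nc_comm (der i a) b + nc_comm a (der i b)"
  by (simp add: nc_comm_eq der_diff der_leibniz)

lemma der_comm_var: "der i a = 0 \<Longrightarrow> der i (nc_comm a (nc_var j)) = 0"
  by (simp add: der_comm der_var comm_zero_left comm_zero_right comm_one_right)

lemma der_foldl: "der i c = 0 \<Longrightarrow> der i (foldl (\<lambda>c j. nc_comm c (nc_var j)) c is) = 0"
  by (induction "is" arbitrary: c) (auto simp: der_comm_var)

lemma der_left_comm: "length is \<ge> 2 \<Longrightarrow> der i (left_comm is) = 0"
proof -
  assume "length is \<ge> 2"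
  then obtain h t r where "is": "is = h # t # r" by (metis One_nat_def Suc_1 Suc_le_length_iff)
  have "der i (nc_comm (nc_var h) (nc_var t)) = 0"
    by (simp add: der_comm der_var comm_zero_left comm_zero_right comm_one_right comm_one_left)
  then show ?thesis unfolding "is" left_comm_def by (simp add: der_foldl)
qed

lemma der_Gamma: "f \<in> Gamma \<Longrightarrow> der i f = 0"
proof (induction rule: Gamma.induct)
  case (Gamma_comm "is") then show ?case by (rule der_left_comm)
next
  case Gamma_one then show ?case by (rule der_one)
next
  case (Gamma_add f g) show ?case by (simp only: nc_add_eq der_add Gamma_add.IH add.right_neutral)
next
  case (Gamma_neg f) show ?case by (simp only: nc_neg_eq der_neg Gamma_neg.IH minus_zero)
next
  case (Gamma_mult f g) show ?case
    by (simp only: der_leibniz Gamma_mult.IH nc_mult_zero_left nc_mult_zero_right add.right_neutral)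
qed



lemma sorted_remove_mid:
  assumes "sorted (a @ i # b)" shows "remove1 i (a @ i # b) = a @ b"
proof -
  have "sort (remove1 i (a @ i # b)) = a @ b"
    by (rule properties_for_sort) (use assms in \<open>simp_all add: sorted_append\<close>)
  moreover have "sort (remove1 i (a @ i # b)) = remove1 i (a @ i # b)"
    by (rule sorted_sort_id[OF sorted_remove1[OF assms]])
  ultimately show ?thesis by simp
qed

lemma der_mono_nz:
  assumes "sorted u" "der i (nc_mono u) w \<noteq> 0" shows "i \<in> set u \<and> w = remove1 i u"
proof -
  from assms(2) obtain x where "x \<in> splits w" "(case x of (a, b) \<Rightarrow> nc_mono u (a @ i # b)) \<noteq> 0"
    unfolding der_def by (auto elim: sum.not_neutral_contains_not_neutral)
  then obtain a b where ab: "a @ b = w" "a @ i # b = u"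
    by (auto simp: splits_def nc_mono_def split: if_splits)
  then show ?thesis using sorted_remove_mid[of a i b] assms(1) by auto
qed

definition cder :: "nat \<Rightarrow> nat list \<Rightarrow> int" where
  "cder i u = der i (nc_mono u) (remove1 i u)"

lemma der_mono:
  assumes "sorted u"
  shows "der i (nc_mono u) = (if i \<in> set u then sc (cder i u) (nc_mono (remove1 i u)) else 0)"
proof
  fix w
  show "der i (nc_mono u) w = (if i \<in> set u then sc (cder i u) (nc_mono (remove1 i u)) else 0) w"
  proof (cases "i \<in> set u \<and> w = remove1 i u")
    case True then show ?thesis by (simp add: cder_def sc_def nc_mono_def)
  next
    case False
    then have "der i (nc_mono u) w = 0" using der_mono_nz[OF assms] by blast
    then show ?thesis using False by (auto simp: sc_def nc_mono_def)
  qed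
qed

lemma cder_pos:
  assumes "sorted u" "i \<in> set u" shows "cder i u \<ge> 1"
proof -
  obtain a b where u: "u = a @ i # b" using assms(2) by (metis split_list)
  have r: "remove1 i u = a @ b" using sorted_remove_mid assms(1) u by simp
  have "cder i u = (\<Sum>x\<in>splits (a @ b). (case x of (p, q) \<Rightarrow> nc_mono u (p @ i # q)))"
    by (simp add: cder_def der_def r)
  also have "\<dots> \<ge> (case (a, b) of (p, q) \<Rightarrow> nc_mono u (p @ i # q))"
    by (rule member_le_sum) (auto simp: nc_mono_def, auto simp: splits_def)
  finally show ?thesis by (simp add: u nc_mono_def)
qed

lemma INDEP_nil:
  assumes "finite F" "\<forall>u\<in>F. u \<noteq> [] \<longrightarrow> \<gamma> u = 0" "(\<Sum>u\<in>F. nc_mult (nc_mono u) (\<gamma> u)) = 0" "[] \<in> F"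
  shows "\<gamma> [] = 0"
proof -
  have "(\<Sum>u\<in>F. nc_mult (nc_mono u) (\<gamma> u)) = (\<Sum>u\<in>F. if u = [] then \<gamma> [] else 0)"
    by (rule sum.cong) (use assms(2) in \<open>auto simp: nc_mono_Nil\<close>)
  also have "\<dots> = \<gamma> []" using assms(1,4) by (simp add: sum.delta)
  finally show ?thesis using assms(3) by simp
qed

lemma INDEP_n:
  "\<forall>F \<gamma>. finite F \<longrightarrow> (\<forall>u\<in>F. sorted u \<and> length u \<le> n \<and> \<gamma> u \<in> Gamma) \<longrightarrow>
     (\<Sum>u\<in>F. nc_mult (nc_mono u) (\<gamma> u)) = 0 \<longrightarrow> (\<forall>u\<in>F. \<gamma> u = 0)"
proof (induction n)
  case 0
  show ?case
  proof (intro allI impI ballI)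
    fix F \<gamma> u
    assume F: "finite F" "\<forall>u\<in>F. sorted u \<and> length u \<le> 0 \<and> \<gamma> u \<in> Gamma"
      "(\<Sum>u\<in>F. nc_mult (nc_mono u) (\<gamma> u)) = 0" and u: "u \<in> F"
    then have "u = []" by auto
    then show "\<gamma> u = 0" using INDEP_nil[OF F(1) _ F(3)] F(2) u by auto
  qed
next
  case (Suc n)
  show ?case
  proof (intro allI impI)
    fix F \<gamma>
    assume F: "finite F" "\<forall>u\<in>F. sorted u \<and> length u \<le> Suc n \<and> \<gamma> u \<in> Gamma"
      and S: "(\<Sum>u\<in>F. nc_mult (nc_mono u) (\<gamma> u)) = 0"
    have A: "\<gamma> u0 = 0" if u0: "u0 \<in> F" "u0 \<noteq> []" for u0
    proof -
      define i where "i = hd u0"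
      have iu0: "i \<in> set u0" using u0(2) by (simp add: i_def)
      define Fi where "Fi = {u \<in> F. i \<in> set u}"
      define \<delta> where "\<delta> v = sc (cder i (insort i v)) (\<gamma> (insort i v))" for v
      have ins: "insort i (remove1 i u) = u" if "u \<in> Fi" for u
        using that F(2) by (auto simp: Fi_def intro: insort_remove1)
      have inj: "inj_on (remove1 i) Fi" by (metis ins inj_on_def)
      have "0 = der i (\<Sum>u\<in>F. nc_mult (nc_mono u) (\<gamma> u))" using S by simp
      also have "\<dots> = (\<Sum>u\<in>F. nc_mult (der i (nc_mono u)) (\<gamma> u))"
        unfolding der_sum
        by (rule sum.cong) (use F(2) in \<open>auto simp: der_leibniz der_Gamma\<close>)
      also have "\<dots> = (\<Sum>u\<in>F. if i \<in> set u then nc_mult (nc_mono (remove1 i u)) (sc (cder i u) (\<gamma> u)) else 0)"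
        by (rule sum.cong) (use F(2) in \<open>auto simp: der_mono nc_mult_sc_left nc_mult_sc_right\<close>)
      also have "\<dots> = (\<Sum>u\<in>Fi. nc_mult (nc_mono (remove1 i u)) (sc (cder i u) (\<gamma> u)))"
        unfolding Fi_def by (rule sum.inter_filter[symmetric, OF F(1)])
      also have "\<dots> = (\<Sum>u\<in>Fi. nc_mult (nc_mono (remove1 i u)) (\<delta> (remove1 i u)))"
        by (rule sum.cong) (auto simp: \<delta>_def ins)
      also have "\<dots> = (\<Sum>v\<in>remove1 i ` Fi. nc_mult (nc_mono v) (\<delta> v))"
        by (rule sum.reindex[OF inj, symmetric, unfolded comp_def])
      finally have S': "(\<Sum>v\<in>remove1 i ` Fi. nc_mult (nc_mono v) (\<delta> v)) = 0" by simp
      have G: "\<forall>v\<in>remove1 i ` Fi. sorted v \<and> length v \<le> n \<and> \<delta> v \<in> Gamma"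
      proof
        fix v assume "v \<in> remove1 i ` Fi"
        then obtain u where u: "u \<in> Fi" "v = remove1 i u" by blast
        then have "sorted u" "length u \<le> Suc n" "\<gamma> u \<in> Gamma" "i \<in> set u" using F(2) by (auto simp: Fi_def)
        then show "sorted v \<and> length v \<le> n \<and> \<delta> v \<in> Gamma"
          using u by (auto simp: sorted_remove1 length_remove1 \<delta>_def ins intro!: Gamma_sc)
      qed
      have fin: "finite (remove1 i ` Fi)" using F(1) by (simp add: Fi_def)
      have u0Fi: "u0 \<in> Fi" using u0 iu0 by (simp add: Fi_def)
      have "\<delta> (remove1 i u0) = 0"
        using Suc.IH fin G S' u0Fi by blast
      then have z: "sc (cder i u0) (\<gamma> u0) = 0" by (simp add: \<delta>_def ins[OF u0Fi])
      have "cder i u0 \<ge> 1" using cder_pos F(2) u0 iu0 by blast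
      then show "\<gamma> u0 = 0" using z by (auto simp: sc_def fun_eq_iff)
    qed
    show "\<forall>u\<in>F. \<gamma> u = 0"
    proof
      fix u assume u: "u \<in> F"
      show "\<gamma> u = 0"
      proof (cases "u = []")
        case True then show ?thesis using INDEP_nil[OF F(1) _ S] A u by blast
      next
        case False then show ?thesis using A u by blast
      qed
    qed
  qed
qed

lemma INDEP:
  assumes "finite F" "\<forall>u\<in>F. sorted u \<and> \<gamma> u \<in> Gamma" "(\<Sum>u\<in>F. nc_mult (nc_mono u) (\<gamma> u)) = 0"
  shows "\<forall>u\<in>F. \<gamma> u = 0"
proof -
  define n where "n = Max (length ` F)"
  have "\<forall>u\<in>F. length u \<le> n" using assms(1) by (auto simp: n_def)
  then show ?thesis using INDEP_n[of n] assms by blast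
qed



definition supp :: "(nat list \<Rightarrow> ncpoly) \<Rightarrow> nat list set" where
  "supp d = {u. d u \<noteq> 0}"

definition PDEC :: "ncpoly \<Rightarrow> (nat list \<Rightarrow> ncpoly) \<Rightarrow> bool" where
  "PDEC f d \<longleftrightarrow> (\<forall>u. d u \<in> Gamma) \<and> (\<forall>u. \<not> sorted u \<longrightarrow> d u = 0) \<and> finite (supp d) \<and>
     f = (\<Sum>u\<in>supp d. nc_mult (nc_mono u) (d u))"

definition dec :: "ncpoly \<Rightarrow> nat list \<Rightarrow> ncpoly" where
  "dec f = (SOME d. PDEC f d)"

lemma sum_supp:
  assumes "finite F" "supp d \<subseteq> F"
  shows "(\<Sum>u\<in>F. nc_mult (nc_mono u) (d u)) = (\<Sum>u\<in>supp d. nc_mult (nc_mono u) (d u))"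
  by (rule sum.mono_neutral_right[OF assms(1,2)]) (auto simp: supp_def)

lemma PDEC_intro:
  assumes "\<forall>u. d u \<in> Gamma" "\<forall>u. \<not> sorted u \<longrightarrow> d u = 0" "finite F" "supp d \<subseteq> F"
    "f = (\<Sum>u\<in>F. nc_mult (nc_mono u) (d u))"
  shows "PDEC f d"
  unfolding PDEC_def using assms sum_supp[OF assms(3,4)] finite_subset[OF assms(4,3)] by simp

lemma PDEC_sum:
  assumes "PDEC f d" "finite F" "supp d \<subseteq> F"
  shows "f = (\<Sum>u\<in>F. nc_mult (nc_mono u) (d u))"
  using assms sum_supp[OF assms(2,3)] unfolding PDEC_def by simp

lemma PDEC_G: "PDEC f d \<Longrightarrow> d u \<in> Gamma" unfolding PDEC_def by (drule conjunct1) (erule spec)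
lemma PDEC_s: "PDEC f d \<Longrightarrow> \<not> sorted u \<Longrightarrow> d u = 0" unfolding PDEC_def
  by (drule conjunct2, drule conjunct1) (erule allE, erule mp)
lemma PDEC_f: "PDEC f d \<Longrightarrow> finite (supp d)" unfolding PDEC_def
  by (drule conjunct2, drule conjunct2, drule conjunct1)

lemma PDEC_unique:
  assumes "PDEC f d" "PDEC f e" shows "d = e"
proof
  fix u
  define F where "F = supp d \<union> supp e"
  have fin: "finite F" unfolding F_def using PDEC_f[OF assms(1)] PDEC_f[OF assms(2)] by (simp only: finite_Un)
  have e1: "f = (\<Sum>u\<in>F. nc_mult (nc_mono u) (d u))"
    by (rule PDEC_sum[OF assms(1) fin]) (simp add: F_def)
  have e2: "f = (\<Sum>u\<in>F. nc_mult (nc_mono u) (e u))"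
    by (rule PDEC_sum[OF assms(2) fin]) (simp add: F_def)
  have "(\<Sum>u\<in>F. nc_mult (nc_mono u) (d u - e u)) =
        (\<Sum>u\<in>F. nc_mult (nc_mono u) (d u)) - (\<Sum>u\<in>F. nc_mult (nc_mono u) (e u))"
    by (simp only: nc_mult_diff_right sum_subtractf)
  also have "\<dots> = f - f"
    by (simp only: e1[symmetric] e2[symmetric])
  finally have z: "(\<Sum>u\<in>F. nc_mult (nc_mono u) (d u - e u)) = 0" by (simp only: diff_self)
  have "\<forall>u\<in>F. sorted u \<and> d u - e u \<in> Gamma"
    unfolding F_def supp_def
    using PDEC_s[OF assms(1)] PDEC_s[OF assms(2)] PDEC_G[OF assms(1)] PDEC_G[OF assms(2)]
    by (auto intro: Gamma_diff)
  then have all0: "\<forall>u\<in>F. d u - e u = 0" by (rule INDEP[OF fin _ z])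
  show "d u = e u"
  proof (cases "u \<in> F")
    case True
    then have "d u - e u = 0" using all0 by blast
    then show ?thesis by (simp only: right_minus_eq)
  next
    case False
    then have "d u = 0" "e u = 0" unfolding F_def supp_def by simp_all
    then show ?thesis by (simp only:)
  qed
qed

lemma DEC_PDEC:
  assumes "DEC A f" "A \<subseteq> Gamma" "0 \<in> A"
  shows "\<exists>d. PDEC f d \<and> (\<forall>u. d u \<in> A)"
proof -
  obtain F d0 where F: "finite F" "\<forall>u\<in>F. sorted u \<and> d0 u \<in> A" "f = (\<Sum>u\<in>F. nc_mult (nc_mono u) (d0 u))"
    using assms(1) unfolding DEC_def by blast
  define d where "d u = (if u \<in> F then d0 u else 0)" for u
  have e: "f = (\<Sum>u\<in>F. nc_mult (nc_mono u) (d u))" unfolding F(3) by (rule sum.cong) (simp_all add: d_def)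
  have s: "supp d \<subseteq> F" by (auto simp: supp_def d_def)
  have a: "\<forall>u. d u \<in> A" using F(2) assms(3) by (simp add: d_def)
  have o: "\<forall>u. \<not> sorted u \<longrightarrow> d u = 0" using F(2) by (auto simp: d_def)
  have g: "\<forall>u. d u \<in> Gamma" using a assms(2) by blast
  show ?thesis by (intro exI[of _ d] conjI PDEC_intro[OF g o F(1) s e] a)
qed

lemma DEC_Gamma_ZX: "f \<in> ZX \<Longrightarrow> DEC Gamma f"
proof -
  assume f: "f \<in> ZX"
  have e: "f = (\<Sum>w\<in>{w. f w \<noteq> 0}. nc_mult (nc_mono w) (sc (f w) nc_one))"
    by (subst ZX_expand[OF f]) (simp add: nc_mult_sc_right)
  have "DEC Gamma (\<Sum>w\<in>{w. f w \<noteq> 0}. nc_mult (nc_mono w) (sc (f w) nc_one))"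
  proof (rule DEC_sum[OF subgrp_Gamma])
    fix w
    have "Aof (sc (f w) nc_one) \<subseteq> Gamma"
      unfolding Aof_def by (auto simp: nc_mult_sc_right intro: Gamma_sc)
    then show "DEC Gamma (nc_mult (nc_mono w) (sc (f w) nc_one))"
      using SPAN DEC_mono by blast
  qed
  then show ?thesis using e by simp
qed

lemma PDEC_dec: "f \<in> ZX \<Longrightarrow> PDEC f (dec f)"
  unfolding dec_def using DEC_PDEC[OF DEC_Gamma_ZX _ Gamma_zero] by (metis order_refl someI)

lemma dec_eq: "PDEC f d \<Longrightarrow> dec f = d"
  unfolding dec_def by (metis PDEC_unique someI)

lemma dec_Gamma: "f \<in> ZX \<Longrightarrow> dec f u \<in> Gamma"
  using PDEC_dec unfolding PDEC_def by blast

lemma dec_unsorted: "f \<in> ZX \<Longrightarrow> \<not> sorted u \<Longrightarrow> dec f u = 0"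
  using PDEC_dec unfolding PDEC_def by blast

lemma dec_finite: "f \<in> ZX \<Longrightarrow> finite (supp (dec f))"
  using PDEC_dec unfolding PDEC_def by blast

lemma dec_add:
  assumes "f \<in> ZX" "g \<in> ZX" shows "dec (f + g) = dec f + dec g"
proof (rule dec_eq, rule PDEC_intro)
  define F where "F = supp (dec f) \<union> supp (dec g)"
  show "\<forall>u. (dec f + dec g) u \<in> Gamma" using assms by (simp add: dec_Gamma Gamma_add')
  show "\<forall>u. \<not> sorted u \<longrightarrow> (dec f + dec g) u = 0" using assms by (simp add: dec_unsorted)
  show "finite F" using assms by (simp add: F_def dec_finite)
  show "supp (dec f + dec g) \<subseteq> F" by (auto simp: F_def supp_def)
  have "f = (\<Sum>u\<in>F. nc_mult (nc_mono u) (dec f u))"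
    by (rule PDEC_sum[OF PDEC_dec[OF assms(1)]]) (auto simp: F_def assms dec_finite)
  moreover have "g = (\<Sum>u\<in>F. nc_mult (nc_mono u) (dec g u))"
    by (rule PDEC_sum[OF PDEC_dec[OF assms(2)]]) (auto simp: F_def assms dec_finite)
  ultimately show "f + g = (\<Sum>u\<in>F. nc_mult (nc_mono u) ((dec f + dec g) u))"
    by (simp add: nc_mult_add_right sum.distrib)
qed



lemma lig_add': "f \<in> left_ideal_gen R S \<Longrightarrow> g \<in> left_ideal_gen R S \<Longrightarrow> f + g \<in> left_ideal_gen R S"
  using lig_add by (simp only: nc_add_eq)
lemma lig_neg': "f \<in> left_ideal_gen R S \<Longrightarrow> - f \<in> left_ideal_gen R S"
  using lig_neg by (simp only: nc_neg_eq)
lemma lig_zero': "0 \<in> left_ideal_gen R S"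
  using lig_zero by (simp only: nc_zero_eq)
lemma lig_sum: "(\<And>a. a \<in> A \<Longrightarrow> F a \<in> left_ideal_gen R S) \<Longrightarrow> (\<Sum>a\<in>A. F a) \<in> left_ideal_gen R S"
proof (induction A rule: infinite_finite_induct)
  case (infinite A) then show ?case by (simp only: sum.infinite[OF infinite(1)] lig_zero')
next
  case empty then show ?case by (simp only: sum.empty lig_zero')
next
  case (insert x A) then show ?case by (simp only: sum.insert[OF insert(1,2)]) (rule lig_add', auto)
qed

lemma subgrp_lig: "subgrp (left_ideal_gen R S)"
  unfolding subgrp_def using lig_add' lig_neg' lig_zero' by blast

lemma J_Gamma: assumes S: "S \<subseteq> Gamma" shows "f \<in> left_ideal_gen Gamma S \<Longrightarrow> f \<in> Gamma"
proof (induction rule: left_ideal_gen.induct)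
  case (lig_gen s) then show ?case using S by blast
next
  case lig_zero then show ?case by (simp only: nc_zero_eq Gamma_zero)
next
  case (lig_add f g) then show ?case by (simp only: nc_add_eq) (rule Gamma_add')
next
  case (lig_neg f) then show ?case by (simp only: nc_neg_eq) (rule Gamma_neg')
next
  case (lig_lmult r f) then show ?case by (intro Gamma_mult)
qed

lemma I_ZX: assumes S: "S \<subseteq> Gamma" shows "f \<in> left_ideal_gen ZX S \<Longrightarrow> f \<in> ZX"
proof (induction rule: left_ideal_gen.induct)
  case (lig_gen s) then show ?case using S Gamma_ZX by blast
next
  case lig_zero then show ?case by (simp only: nc_zero_eq ZX_zero)
next
  case (lig_add f g) then show ?case by (simp only: nc_add_eq) (rule ZX_add)
next
  case (lig_neg f) then show ?case by (simp only: nc_neg_eq) (rule ZX_neg)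
next
  case (lig_lmult r f) then show ?case by (intro ZX_mult)
qed

lemma J_I: "f \<in> left_ideal_gen Gamma S \<Longrightarrow> f \<in> left_ideal_gen ZX S"
proof (induction rule: left_ideal_gen.induct)
  case (lig_lmult r f) then show ?case by (intro left_ideal_gen.lig_lmult Gamma_ZX)
qed (auto intro: left_ideal_gen.intros)

lemma J_sc: "d \<in> left_ideal_gen Gamma S \<Longrightarrow> sc k d \<in> left_ideal_gen Gamma S"
proof -
  assume d: "d \<in> left_ideal_gen Gamma S"
  have "sc k d = nc_mult (sc k nc_one) d" by (simp add: nc_mult_sc_left)
  also have "\<dots> \<in> left_ideal_gen Gamma S" by (intro lig_lmult d Gamma_sc Gamma_one)
  finally show ?thesis .
qed

lemma DEC_J_mono: "d \<in> left_ideal_gen Gamma S \<Longrightarrow> DEC (left_ideal_gen Gamma S) (nc_mult (nc_mono w) d)"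
proof -
  assume d: "d \<in> left_ideal_gen Gamma S"
  have "Aof d \<subseteq> left_ideal_gen Gamma S" unfolding Aof_def using d by (auto intro: lig_lmult)
  then show ?thesis using SPAN DEC_mono by blast
qed

lemma DEC_J_ZX:
  assumes g: "g \<in> ZX" and d: "d \<in> left_ideal_gen Gamma S"
  shows "DEC (left_ideal_gen Gamma S) (nc_mult g d)"
proof -
  have "nc_mult g d = (\<Sum>w\<in>{w. g w \<noteq> 0}. nc_mult (sc (g w) (nc_mono w)) d)"
    by (subst ZX_expand[OF g]) (simp only: nc_mult_sum_left)
  also have "\<dots> = (\<Sum>w\<in>{w. g w \<noteq> 0}. nc_mult (nc_mono w) (sc (g w) d))"
    by (simp only: nc_mult_sc_left nc_mult_sc_right)
  finally have e: "nc_mult g d = \<dots>" .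
  show ?thesis unfolding e
    by (rule DEC_sum[OF subgrp_lig]) (intro DEC_J_mono J_sc d)
qed

lemma I_DEC:
  assumes S: "S \<subseteq> Gamma"
  shows "f \<in> left_ideal_gen ZX S \<Longrightarrow> DEC (left_ideal_gen Gamma S) f"
proof (induction rule: left_ideal_gen.induct)
  case (lig_gen s)
  have "s = nc_mult (nc_mono []) s" by (simp add: nc_mono_Nil)
  moreover have "DEC (left_ideal_gen Gamma S) (nc_mult (nc_mono []) s)"
    by (rule DEC_single) (auto intro: left_ideal_gen.lig_gen lig_gen)
  ultimately show ?case by simp
next
  case lig_zero then show ?case by (simp only: nc_zero_eq DEC_zero)
next
  case (lig_add f g) then show ?case by (simp only: nc_add_eq) (rule DEC_add[OF subgrp_lig])
next
  case (lig_neg f) then show ?case by (simp only: nc_neg_eq) (rule DEC_neg[OF subgrp_lig])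
next
  case (lig_lmult r f)
  obtain F d where F: "finite F" "\<forall>u\<in>F. sorted u \<and> d u \<in> left_ideal_gen Gamma S"
      "f = (\<Sum>u\<in>F. nc_mult (nc_mono u) (d u))"
    using lig_lmult.IH unfolding DEC_def by blast
  have e: "nc_mult r f = (\<Sum>u\<in>F. nc_mult (nc_mult r (nc_mono u)) (d u))"
    unfolding F(3) by (simp only: nc_mult_sum_right nc_mult_assoc)
  have "DEC (left_ideal_gen Gamma S) \<dots>"
    by (rule DEC_sum[OF subgrp_lig], rule DEC_J_ZX)
       (use F(2) lig_lmult.hyps(1) in \<open>auto intro: ZX_mult ZX_mono\<close>)
  then show ?case by (subst e)
qed

lemma I_char:
  assumes S: "S \<subseteq> Gamma"
  shows "f \<in> left_ideal_gen ZX S \<longleftrightarrow> f \<in> ZX \<and> (\<forall>u. dec f u \<in> left_ideal_gen Gamma S)"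
proof
  assume f: "f \<in> left_ideal_gen ZX S"
  have J: "left_ideal_gen Gamma S \<subseteq> Gamma" using J_Gamma[OF S] by blast
  obtain d where d: "PDEC f d" "\<forall>u. d u \<in> left_ideal_gen Gamma S"
    using DEC_PDEC[OF I_DEC[OF S f] J lig_zero'] by blast
  show "f \<in> ZX \<and> (\<forall>u. dec f u \<in> left_ideal_gen Gamma S)"
    using I_ZX[OF S f] dec_eq[OF d(1)] d(2) by simp
next
  assume f: "f \<in> ZX \<and> (\<forall>u. dec f u \<in> left_ideal_gen Gamma S)"
  have "f = (\<Sum>u\<in>supp (dec f). nc_mult (nc_mono u) (dec f u))"
    using PDEC_dec[of f] f unfolding PDEC_def by blast
  also have "\<dots> \<in> left_ideal_gen ZX S"
    by (rule lig_sum, rule lig_lmult[OF ZX_mono], rule J_I) (use f in blast)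
  finally show "f \<in> left_ideal_gen ZX S" .
qed



lemma carrier_add_grp[simp]: "carrier (add_grp A) = A" by (simp add: add_grp_def)
lemma mult_add_grp[simp]: "x \<otimes>\<^bsub>add_grp A\<^esub> y = x + y" by (simp add: add_grp_def nc_add_eq)
lemma one_add_grp[simp]: "\<one>\<^bsub>add_grp A\<^esub> = 0" by (simp add: add_grp_def nc_zero_eq)

lemma comm_group_add_grp: assumes A: "subgrp A" shows "comm_group (add_grp A)"
proof (rule comm_groupI)
  show "\<And>x y. x \<in> carrier (add_grp A) \<Longrightarrow> y \<in> carrier (add_grp A) \<Longrightarrow> x \<otimes>\<^bsub>add_grp A\<^esub> y \<in> carrier (add_grp A)"
    using A by (simp add: subgrp_def)
  show "\<one>\<^bsub>add_grp A\<^esub> \<in> carrier (add_grp A)" using A by (simp add: subgrp_def)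
  show "\<And>x y z. x \<in> carrier (add_grp A) \<Longrightarrow> y \<in> carrier (add_grp A) \<Longrightarrow> z \<in> carrier (add_grp A) \<Longrightarrow>
      x \<otimes>\<^bsub>add_grp A\<^esub> y \<otimes>\<^bsub>add_grp A\<^esub> z = x \<otimes>\<^bsub>add_grp A\<^esub> (y \<otimes>\<^bsub>add_grp A\<^esub> z)"
    by (simp add: add.assoc)
  show "\<And>x y. x \<in> carrier (add_grp A) \<Longrightarrow> y \<in> carrier (add_grp A) \<Longrightarrow> x \<otimes>\<^bsub>add_grp A\<^esub> y = y \<otimes>\<^bsub>add_grp A\<^esub> x"
    by (simp add: add.commute)
  show "\<And>x. x \<in> carrier (add_grp A) \<Longrightarrow> \<one>\<^bsub>add_grp A\<^esub> \<otimes>\<^bsub>add_grp A\<^esub> x = x" by simp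
  show "\<And>x. x \<in> carrier (add_grp A) \<Longrightarrow> \<exists>y\<in>carrier (add_grp A). y \<otimes>\<^bsub>add_grp A\<^esub> x = \<one>\<^bsub>add_grp A\<^esub>"
    using A by (auto simp: subgrp_def intro!: bexI[of _ "- _"])
qed

lemma group_add_grp: "subgrp A \<Longrightarrow> group (add_grp A)"
  using comm_group_add_grp comm_group_def by blast

lemma inv_add_grp: assumes A: "subgrp A" "x \<in> A" shows "inv\<^bsub>add_grp A\<^esub> x = - x"
  using A by (intro group.inv_equality[OF group_add_grp[OF A(1)]]) (auto simp: subgrp_def)

lemma subgroup_add_grp:
  assumes A: "subgrp A" and H: "subgrp H" "H \<subseteq> A" shows "subgroup H (add_grp A)"
proof (rule group.subgroupI[OF group_add_grp[OF A]])
  show "H \<subseteq> carrier (add_grp A)" using H by simp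
  show "H \<noteq> {}" using H by (auto simp: subgrp_def)
  show "\<And>a. a \<in> H \<Longrightarrow> inv\<^bsub>add_grp A\<^esub> a \<in> H" using H by (auto simp: inv_add_grp[OF A] subgrp_def)
  show "\<And>a b. a \<in> H \<Longrightarrow> b \<in> H \<Longrightarrow> a \<otimes>\<^bsub>add_grp A\<^esub> b \<in> H" using H by (auto simp: subgrp_def)
qed

lemma normal_add_grp:
  assumes A: "subgrp A" and H: "subgrp H" "H \<subseteq> A" shows "H \<lhd> add_grp A"
  using comm_group.subgroup_imp_normal[OF comm_group_add_grp[OF A] subgroup_add_grp[OF A H]] .

lemma group_Mod: assumes A: "subgrp A" and H: "subgrp H" "H \<subseteq> A" shows "group (add_grp A Mod H)"
  using normal.factorgroup_is_group[OF normal_add_grp[OF A H]] .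

lemma rcos_add_grp: "H #>\<^bsub>add_grp A\<^esub> a = (\<lambda>h. h + a) ` H"
  by (auto simp: r_coset_def)

lemma rcos_eq_self:
  assumes A: "subgrp A" and H: "subgrp H" "H \<subseteq> A" and a: "a \<in> A"
  shows "H #>\<^bsub>add_grp A\<^esub> a = H \<longleftrightarrow> a \<in> H"
  using group.coset_join1[OF group_add_grp[OF A] _ _ subgroup_add_grp[OF A H]]
        group.coset_join2[OF group_add_grp[OF A] _ subgroup_add_grp[OF A H]] a by auto

lemma rcos_sum_add:
  assumes A: "subgrp A" and H: "subgrp H" "H \<subseteq> A" and a: "a \<in> A" "b \<in> A"
  shows "(H #>\<^bsub>add_grp A\<^esub> a) <#>\<^bsub>add_grp A\<^esub> (H #>\<^bsub>add_grp A\<^esub> b) = H #>\<^bsub>add_grp A\<^esub> (a + b)"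
  using normal.rcos_sum[OF normal_add_grp[OF A H], of a b] a by simp

lemma carrier_Mod: "carrier (add_grp A Mod H) = (\<lambda>a. H #>\<^bsub>add_grp A\<^esub> a) ` A"
  by (simp add: carrier_FactGroup)

lemma subgrp_lmult: assumes A: "subgrp A" shows "subgrp (lmult_set u A)"
  unfolding subgrp_def lmult_set_def
proof (intro conjI ballI)
  show "0 \<in> nc_mult (nc_mono u) ` A" using A by (auto simp: subgrp_def intro!: image_eqI[of _ _ 0])
next
  fix x y assume "x \<in> nc_mult (nc_mono u) ` A" "y \<in> nc_mult (nc_mono u) ` A"
  then obtain a b where "a \<in> A" "b \<in> A" "x = nc_mult (nc_mono u) a" "y = nc_mult (nc_mono u) b" by auto
  then show "x + y \<in> nc_mult (nc_mono u) ` A"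
    using A by (auto simp: subgrp_def nc_mult_add_right[symmetric] intro!: image_eqI[of _ _ "a + b"])
next
  fix x assume "x \<in> nc_mult (nc_mono u) ` A"
  then obtain a where "a \<in> A" "x = nc_mult (nc_mono u) a" by auto
  then show "- x \<in> nc_mult (nc_mono u) ` A"
    using A by (auto simp: subgrp_def nc_mult_neg_right[symmetric] intro!: image_eqI[of _ _ "- a"])
qed

lemma lmult_mono: "A \<subseteq> B \<Longrightarrow> lmult_set u A \<subseteq> lmult_set u B"
  by (auto simp: lmult_set_def)

lemma inj_lmult: "inj (nc_mult (nc_mono u))"
  by (auto simp: inj_def intro: nc_mono_mult_inj)

lemma image_rcos:
  "nc_mult (nc_mono u) ` (H #>\<^bsub>add_grp A\<^esub> a) = lmult_set u H #>\<^bsub>add_grp B\<^esub> nc_mult (nc_mono u) a"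
  unfolding rcos_add_grp lmult_set_def image_image by (simp add: nc_mult_add_right image_image)

lemma lmult_mem: "nc_mult (nc_mono u) a \<in> lmult_set u A \<longleftrightarrow> a \<in> A"
  unfolding lmult_set_def using inj_lmult by (auto dest: injD)



lemma part2:
  assumes S: "S \<subseteq> Gamma"
  shows "(\<lambda>C. (\<lambda>f. nc_mult (nc_mono u) f) ` C)
             \<in> iso (add_grp Gamma Mod left_ideal_gen Gamma S)
                   (add_grp (lmult_set u Gamma) Mod lmult_set u (left_ideal_gen Gamma S))"
proof -
  define J where "J = left_ideal_gen Gamma S"
  define m where "m = nc_mult (nc_mono u)"
  have sG: "subgrp Gamma" by (rule subgrp_Gamma)
  have sJ: "subgrp J" "J \<subseteq> Gamma" unfolding J_def using subgrp_lig J_Gamma[OF S] by auto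
  have smG: "subgrp (lmult_set u Gamma)" by (rule subgrp_lmult[OF sG])
  have smJ: "subgrp (lmult_set u J)" "lmult_set u J \<subseteq> lmult_set u Gamma"
    using subgrp_lmult[OF sJ(1)] lmult_mono[OF sJ(2)] by auto
  have img: "m ` (J #>\<^bsub>add_grp Gamma\<^esub> a) = lmult_set u J #>\<^bsub>add_grp (lmult_set u Gamma)\<^esub> m a" for a
    unfolding m_def by (rule image_rcos)
  have mG: "m a \<in> lmult_set u Gamma" if "a \<in> Gamma" for a
    using that unfolding m_def lmult_set_def by blast
  have tgt: "carrier (add_grp (lmult_set u Gamma) Mod lmult_set u J)
        = (\<lambda>a. lmult_set u J #>\<^bsub>add_grp (lmult_set u Gamma)\<^esub> m a) ` Gamma"
    unfolding carrier_Mod lmult_set_def m_def by (simp add: image_image)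
  have src: "carrier (add_grp Gamma Mod J) = (\<lambda>a. J #>\<^bsub>add_grp Gamma\<^esub> a) ` Gamma"
    by (rule carrier_Mod)
  have hom: "(\<lambda>C. m ` C) \<in> hom (add_grp Gamma Mod J) (add_grp (lmult_set u Gamma) Mod lmult_set u J)"
  proof (rule homI)
    fix x assume "x \<in> carrier (add_grp Gamma Mod J)"
    then obtain a where a: "a \<in> Gamma" "x = J #>\<^bsub>add_grp Gamma\<^esub> a" using src by auto
    show "m ` x \<in> carrier (add_grp (lmult_set u Gamma) Mod lmult_set u J)"
      unfolding tgt a(2) img using a(1) by blast
  next
    fix x y assume "x \<in> carrier (add_grp Gamma Mod J)" "y \<in> carrier (add_grp Gamma Mod J)"
    then obtain a b where a: "a \<in> Gamma" "x = J #>\<^bsub>add_grp Gamma\<^esub> a"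
      and b: "b \<in> Gamma" "y = J #>\<^bsub>add_grp Gamma\<^esub> b" using src by auto
    have "x \<otimes>\<^bsub>add_grp Gamma Mod J\<^esub> y = J #>\<^bsub>add_grp Gamma\<^esub> (a + b)"
      unfolding a(2) b(2) mult_FactGroup by (rule rcos_sum_add[OF sG sJ a(1) b(1)])
    then have e1: "m ` (x \<otimes>\<^bsub>add_grp Gamma Mod J\<^esub> y) = lmult_set u J #>\<^bsub>add_grp (lmult_set u Gamma)\<^esub> m (a + b)"
      by (simp only: img)
    have e2: "m (a + b) = m a + m b" by (simp add: m_def nc_mult_add_right)
    have e3: "lmult_set u J #>\<^bsub>add_grp (lmult_set u Gamma)\<^esub> (m a + m b) = (m ` x) \<otimes>\<^bsub>add_grp (lmult_set u Gamma) Mod lmult_set u J\<^esub> (m ` y)"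
      unfolding a(2) b(2) img mult_FactGroup
      by (rule rcos_sum_add[OF smG smJ mG[OF a(1)] mG[OF b(1)], symmetric])
    show "m ` (x \<otimes>\<^bsub>add_grp Gamma Mod J\<^esub> y) = (m ` x) \<otimes>\<^bsub>add_grp (lmult_set u Gamma) Mod lmult_set u J\<^esub> (m ` y)"
      by (simp only: e1 e2 e3)
  qed
  have inj: "inj_on (\<lambda>C. m ` C) (carrier (add_grp Gamma Mod J))"
    unfolding m_def by (auto simp: inj_on_def inj_image_eq_iff[OF inj_lmult])
  have surj: "(\<lambda>C. m ` C) ` carrier (add_grp Gamma Mod J) = carrier (add_grp (lmult_set u Gamma) Mod lmult_set u J)"
    unfolding src tgt image_image img ..
  show ?thesis
    using hom inj surj unfolding iso_def bij_betw_def J_def m_def by blast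
qed



lemma subgrp_ZX: "subgrp ZX"
  unfolding subgrp_def by (auto intro: ZX_zero ZX_add ZX_neg)

lemma part1:
  assumes S: "S \<subseteq> Gamma"
  shows "(add_grp ZX Mod left_ideal_gen ZX S) \<cong>
           ((add_grp Gamma Mod left_ideal_gen Gamma S) \<times>\<times>
            sum_group sorted_words
              (\<lambda>u. add_grp (lmult_set u Gamma) Mod lmult_set u (left_ideal_gen Gamma S)))"
proof -
  define J where "J = left_ideal_gen Gamma S"
  define G0 where "G0 = add_grp Gamma Mod J"
  define Gu where "Gu u = add_grp (lmult_set u Gamma) Mod lmult_set u J" for u
  define T where "T = G0 \<times>\<times> sum_group sorted_words Gu"
  define C where "C u b = lmult_set u J #>\<^bsub>add_grp (lmult_set u Gamma)\<^esub> b" for u b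
  define \<Phi> where "\<Phi> f = (J #>\<^bsub>add_grp Gamma\<^esub> dec f [],
      \<lambda>u\<in>sorted_words. C u (nc_mult (nc_mono u) (dec f u)))" for f
  have sG: "subgrp Gamma" by (rule subgrp_Gamma)
  have sJ: "subgrp J" "J \<subseteq> Gamma" unfolding J_def using subgrp_lig J_Gamma[OF S] by auto
  have smG: "subgrp (lmult_set u Gamma)" for u by (rule subgrp_lmult[OF sG])
  have smJ: "subgrp (lmult_set u J)" "lmult_set u J \<subseteq> lmult_set u Gamma" for u
    using subgrp_lmult[OF sJ(1)] lmult_mono[OF sJ(2)] by auto
  have grpG0: "group G0" unfolding G0_def by (rule group_Mod[OF sG sJ])
  have grpGu: "group (Gu u)" for u unfolding Gu_def by (rule group_Mod[OF smG smJ])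
  have grpT: "group T" unfolding T_def by (intro DirProd_group grpG0 sum_group grpGu)
  have grpZX: "group (add_grp ZX)" by (rule group_add_grp[OF subgrp_ZX])
  have mG: "nc_mult (nc_mono u) a \<in> lmult_set u Gamma" if "a \<in> Gamma" for a u
    using that unfolding lmult_set_def by blast
  have C_one: "C u (nc_mult (nc_mono u) a) = lmult_set u J \<longleftrightarrow> a \<in> J" if "a \<in> Gamma" for u a
    unfolding C_def using rcos_eq_self[OF smG smJ mG[OF that]] lmult_mem by simp
  have C0: "C u (nc_mult (nc_mono u) 0) = lmult_set u J" for u
    using C_one[OF Gamma_zero] subgrp_lig unfolding subgrp_def J_def by blast
  have carG0: "carrier G0 = (\<lambda>a. J #>\<^bsub>add_grp Gamma\<^esub> a) ` Gamma" unfolding G0_def by (rule carrier_Mod)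
  have carGu: "carrier (Gu u) = (\<lambda>a. C u (nc_mult (nc_mono u) a)) ` Gamma" for u
    unfolding Gu_def C_def carrier_Mod lmult_set_def by (simp add: image_image)
  have oneGu: "\<one>\<^bsub>Gu u\<^esub> = lmult_set u J" for u by (simp add: Gu_def)
  have carT: "carrier T = carrier G0 \<times> {x \<in> \<Pi>\<^sub>E u\<in>sorted_words. carrier (Gu u).
                 finite {u \<in> sorted_words. x u \<noteq> lmult_set u J}}"
    unfolding T_def by (simp add: carrier_sum_group grpGu oneGu)
  have sw: "u \<in> sorted_words \<longleftrightarrow> u \<noteq> [] \<and> sorted u" for u by (simp add: sorted_words_def)
  have hom: "\<Phi> \<in> hom (add_grp ZX) T"
  proof (rule homI)
    fix f assume "f \<in> carrier (add_grp ZX)"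
    then have f: "f \<in> ZX" by simp
    have "{u \<in> sorted_words. C u (nc_mult (nc_mono u) (dec f u)) \<noteq> lmult_set u J} \<subseteq> supp (dec f)"
      using C0 by (auto simp: supp_def)
    then have fin: "finite {u \<in> sorted_words. C u (nc_mult (nc_mono u) (dec f u)) \<noteq> lmult_set u J}"
      using dec_finite[OF f] finite_subset by blast
    have e: "{u \<in> sorted_words. (\<lambda>u\<in>sorted_words. C u (nc_mult (nc_mono u) (dec f u))) u \<noteq> lmult_set u J}
        = {u \<in> sorted_words. C u (nc_mult (nc_mono u) (dec f u)) \<noteq> lmult_set u J}" by auto
    have p: "(\<lambda>u\<in>sorted_words. C u (nc_mult (nc_mono u) (dec f u))) \<in> (\<Pi>\<^sub>E u\<in>sorted_words. carrier (Gu u))"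
      using dec_Gamma[OF f] by (auto simp: carGu)
    have "J #>\<^bsub>add_grp Gamma\<^esub> dec f [] \<in> carrier G0" using dec_Gamma[OF f] by (auto simp: carG0)
    then show "\<Phi> f \<in> carrier T"
      unfolding carT \<Phi>_def using fin p e by simp
  next
    fix f g assume "f \<in> carrier (add_grp ZX)" "g \<in> carrier (add_grp ZX)"
    then have f: "f \<in> ZX" and g: "g \<in> ZX" by simp_all
    have d: "dec (f + g) = dec f + dec g" by (rule dec_add[OF f g])
    have pf: "(dec f + dec g) u = dec f u + dec g u" for u by (rule plus_fun_apply)
    have fst: "J #>\<^bsub>add_grp Gamma\<^esub> dec (f + g) [] =
        (J #>\<^bsub>add_grp Gamma\<^esub> dec f []) \<otimes>\<^bsub>G0\<^esub> (J #>\<^bsub>add_grp Gamma\<^esub> dec g [])"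
      unfolding G0_def mult_FactGroup d pf
      by (rule rcos_sum_add[OF sG sJ dec_Gamma[OF f] dec_Gamma[OF g], symmetric])
    have snd: "C u (nc_mult (nc_mono u) (dec (f + g) u)) =
        C u (nc_mult (nc_mono u) (dec f u)) \<otimes>\<^bsub>Gu u\<^esub> C u (nc_mult (nc_mono u) (dec g u))" for u
      unfolding Gu_def mult_FactGroup d C_def pf nc_mult_add_right
      by (rule rcos_sum_add[OF smG smJ mG[OF dec_Gamma[OF f]] mG[OF dec_Gamma[OF g]], symmetric])
    show "\<Phi> (f \<otimes>\<^bsub>add_grp ZX\<^esub> g) = \<Phi> f \<otimes>\<^bsub>T\<^esub> \<Phi> g"
      unfolding T_def \<Phi>_def mult_add_grp mult_DirProd mult_sum_group
      unfolding prod.inject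
    proof (intro conjI fst restrict_ext)
      fix u assume u: "u \<in> sorted_words"
      show "C u (nc_mult (nc_mono u) (dec (f + g) u)) =
          (\<lambda>u\<in>sorted_words. C u (nc_mult (nc_mono u) (dec f u))) u \<otimes>\<^bsub>Gu u\<^esub>
          (\<lambda>u\<in>sorted_words. C u (nc_mult (nc_mono u) (dec g u))) u"
        by (simp only: restrict_apply'[OF u] snd)
    qed
  qed
  have gh: "group_hom (add_grp ZX) T \<Phi>"
    unfolding group_hom_def group_hom_axioms_def using grpZX grpT hom by blast
  have surj: "\<Phi> ` carrier (add_grp ZX) = carrier T"
  proof
    show "\<Phi> ` carrier (add_grp ZX) \<subseteq> carrier T" using hom unfolding hom_def by auto
  next
    show "carrier T \<subseteq> \<Phi> ` carrier (add_grp ZX)"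
    proof
      fix x assume x: "x \<in> carrier T"
      obtain C0' g where xg: "x = (C0', g)" by (cases x)
      from x obtain a0 where a0: "a0 \<in> Gamma" "C0' = J #>\<^bsub>add_grp Gamma\<^esub> a0"
        unfolding carT xg carG0 by auto
      from x have gPi: "g \<in> (\<Pi>\<^sub>E u\<in>sorted_words. carrier (Gu u))"
        and finK: "finite {u \<in> sorted_words. g u \<noteq> lmult_set u J}"
        unfolding carT xg by auto
      define K where "K = {u \<in> sorted_words. g u \<noteq> lmult_set u J}"
      have "\<forall>u\<in>sorted_words. \<exists>a. a \<in> Gamma \<and> g u = C u (nc_mult (nc_mono u) a)"
        using gPi by (auto simp: carGu)
      from bchoice[OF this] obtain \<gamma> where \<gamma>: "\<forall>u\<in>sorted_words. \<gamma> u \<in> Gamma \<and> g u = C u (nc_mult (nc_mono u) (\<gamma> u))"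
        by blast
      define d where "d u = (if u = [] then a0 else if u \<in> K then \<gamma> u else 0)" for u
      define f where "f = (\<Sum>u\<in>insert [] K. nc_mult (nc_mono u) (d u))"
      have dG: "\<forall>u. d u \<in> Gamma" using a0 \<gamma> Gamma_zero by (auto simp: d_def K_def)
      have fZX: "f \<in> ZX" unfolding f_def using dG by (intro ZX_sum ZX_mult ZX_mono Gamma_ZX) auto
      have "PDEC f d"
      proof (rule PDEC_intro[OF dG])
        show "\<forall>u. \<not> sorted u \<longrightarrow> d u = 0" by (auto simp: d_def K_def sw)
        show "finite (insert [] K)" using finK by (simp add: K_def)
        show "supp d \<subseteq> insert [] K" by (auto simp: supp_def d_def)
      qed (simp add: f_def)
      then have df: "dec f = d" by (rule dec_eq)
      have "\<Phi> f = x"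
      proof -
        have 1: "J #>\<^bsub>add_grp Gamma\<^esub> dec f [] = C0'" by (simp add: df d_def a0)
        have 2: "(\<lambda>u\<in>sorted_words. C u (nc_mult (nc_mono u) (dec f u))) = g"
        proof (rule ext)
          fix u
          show "(\<lambda>u\<in>sorted_words. C u (nc_mult (nc_mono u) (dec f u))) u = g u"
          proof (cases "u \<in> sorted_words")
            case True
            show ?thesis
            proof (cases "u \<in> K")
              case True then show ?thesis using \<gamma> \<open>u \<in> sorted_words\<close> by (simp add: df d_def sw)
            next
              case False then show ?thesis using \<open>u \<in> sorted_words\<close> C0 by (simp add: df d_def sw K_def)
            qed
          next
            case False
            have "g u = undefined" by (rule PiE_arb[OF gPi False])
            then show ?thesis using False by (simp only: restrict_apply if_False)
          qed
        qed
        show ?thesis unfolding \<Phi>_def xg 1 2 ..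
      qed
      then show "x \<in> \<Phi> ` carrier (add_grp ZX)" by (intro image_eqI[of _ _ f]) (simp_all add: fZX)
    qed
  qed
  have ker: "kernel (add_grp ZX) T \<Phi> = left_ideal_gen ZX S"
  proof -
    have key: "\<Phi> f = \<one>\<^bsub>T\<^esub> \<longleftrightarrow> (\<forall>u. dec f u \<in> J)" if f: "f \<in> ZX" for f
    proof -
      have oneT: "\<one>\<^bsub>T\<^esub> = (J, \<lambda>u\<in>sorted_words. lmult_set u J)"
        by (simp add: T_def G0_def oneGu)
      have a: "J #>\<^bsub>add_grp Gamma\<^esub> dec f [] = J \<longleftrightarrow> dec f [] \<in> J"
        by (rule rcos_eq_self[OF sG sJ dec_Gamma[OF f]])
      have b: "(\<lambda>u\<in>sorted_words. C u (nc_mult (nc_mono u) (dec f u))) = (\<lambda>u\<in>sorted_words. lmult_set u J)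
          \<longleftrightarrow> (\<forall>u\<in>sorted_words. dec f u \<in> J)"
      proof
        assume L: "(\<lambda>u\<in>sorted_words. C u (nc_mult (nc_mono u) (dec f u))) = (\<lambda>u\<in>sorted_words. lmult_set u J)"
        show "\<forall>u\<in>sorted_words. dec f u \<in> J"
        proof
          fix u assume u: "u \<in> sorted_words"
          have "C u (nc_mult (nc_mono u) (dec f u)) = lmult_set u J"
            using fun_cong[OF L, of u] u by (simp only: restrict_apply if_True)
          then show "dec f u \<in> J" using C_one[OF dec_Gamma[OF f]] by blast
        qed
      next
        assume R: "\<forall>u\<in>sorted_words. dec f u \<in> J"
        show "(\<lambda>u\<in>sorted_words. C u (nc_mult (nc_mono u) (dec f u))) = (\<lambda>u\<in>sorted_words. lmult_set u J)"
        proof (rule restrict_ext)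
          fix u assume u: "u \<in> sorted_words"
          show "C u (nc_mult (nc_mono u) (dec f u)) = lmult_set u J"
            using R u C_one[OF dec_Gamma[OF f]] by blast
        qed
      qed
      have c: "(dec f [] \<in> J \<and> (\<forall>u\<in>sorted_words. dec f u \<in> J)) \<longleftrightarrow> (\<forall>u. dec f u \<in> J)"
      proof
        assume L: "dec f [] \<in> J \<and> (\<forall>u\<in>sorted_words. dec f u \<in> J)"
        show "\<forall>u. dec f u \<in> J"
        proof
          fix u
          show "dec f u \<in> J"
          proof (cases "u = []")
            case True then show ?thesis using L by simp
          next
            case False
            show ?thesis
            proof (cases "sorted u")
              case True then show ?thesis using L False sw by blast
            next
              case nt: False
              have "dec f u = 0" by (rule dec_unsorted[OF f nt])
              then show ?thesis using sJ(1) unfolding subgrp_def by simp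
            qed
          qed
        qed
      qed blast
      show ?thesis unfolding \<Phi>_def oneT prod.inject a b c ..
    qed
    show ?thesis
    proof (rule Set.set_eqI, rule iffI)
      fix f assume "f \<in> kernel (add_grp ZX) T \<Phi>"
      then have f: "f \<in> ZX" "\<Phi> f = \<one>\<^bsub>T\<^esub>" unfolding kernel_def by simp_all
      then show "f \<in> left_ideal_gen ZX S" using I_char[OF S] key[OF f(1)] unfolding J_def by blast
    next
      fix f assume f: "f \<in> left_ideal_gen ZX S"
      then have "f \<in> ZX" "\<forall>u. dec f u \<in> J" using I_char[OF S] unfolding J_def by blast+
      then show "f \<in> kernel (add_grp ZX) T \<Phi>" unfolding kernel_def using key by simp
    qed
  qed
  show ?thesis
    using group_hom.FactGroup_iso[OF gh surj, unfolded ker] unfolding T_def G0_def Gu_def J_def .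
qed


theorem corollary2p5:
  fixes S :: "ncpoly set"
  assumes "S \<subseteq> Gamma"
  shows "(add_grp ZX Mod left_ideal_gen ZX S) \<cong>
           ((add_grp Gamma Mod left_ideal_gen Gamma S) \<times>\<times>
            sum_group sorted_words
              (\<lambda>u. add_grp (lmult_set u Gamma) Mod lmult_set u (left_ideal_gen Gamma S)))
         \<and> (\<forall>u \<in> sorted_words.
           (\<lambda>C. (\<lambda>f. nc_mult (nc_mono u) f) ` C)
             \<in> iso (add_grp Gamma Mod left_ideal_gen Gamma S)
                   (add_grp (lmult_set u Gamma) Mod lmult_set u (left_ideal_gen Gamma S)))"
  using part1[OF assms] part2[OF assms] by blast

end
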